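(* Let $(X,W)$ be a marked simplicial set. (1)(a) If $\mathrm{Ex}_+(X,W)$ is a quasicategory, then $(X,W)$ has the right lifting property with respect to $\{\mathrm{LJ}^n_k\hookrightarrow\mathrm{L}^n_k\mid n\ge2,\ 0<k\le n\}$. (1)(b) If $X$ is a quasicategory and $(X,W)$ satisfies CLF, then $\mathrm{Ex}_+(X,W)$ is a quasicategory. (2)(a) If $\mathrm{Ex}^{\mathrm{op}}_+(X,W)$ is a quasicategory, then $(X,W)$ has the right lifting property with respect to $\{\mathrm{RJ}^n_k\hookrightarrow\mathrm{R}^n_k\mid n\ge2,\ 0\le k<n\}$. (2)(b) If $X$ is a quasicategory and $(X,W)$ satisfies CRF, then $\mathrm{Ex}^{\mathrm{op}}_+(X,W)$ is a quasicategory.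
   Context: A marked simplicial set is a pair $(X,W)$ where $X$ is a simplicial set and $W \subseteq X_1$ contains all degenerate $1$-simplices; marked maps preserve marked $1$-simplices. Posets are regarded as simplicial sets via the nerve; $[n]=\{0<\dots<n\}$. For $n\ge 0$, $0\le k\le n$, $\mathrm{L}^n_k$ is the nerve of the poset of subsets $A\subseteq[n]$ with $k\in A$, ordered by inclusion, where $A_0\subseteq A_1$ is marked iff $\max A_0=\max A_1$; $\mathrm{LJ}^n_k\subseteq \mathrm{L}^n_k$ is the maximal simplicial subset not containing the vertex $[n]$. $\mathrm{R}^n_k$ is the nerve of the opposite poset (arrows $A_0\to A_1$ when $A_0\supseteq A_1$), where $A_0\supseteq A_1$ is marked iff $\min A_0=\min A_1$; $\mathrm{RJ}^n_k\subseteq\mathrm{R}^n_k$ is the maximal simplicial subset omitting the vertex $[n]$. $W$ is weakly closed under composition if every map $\Lambda^2_1\to X$ with both edges marked extends to a $2$-simplex all of whose edges are marked. A marked quasicategory $(\mathcal{C},W)$ satisfies CLF if $W$ is weakly closed under composition and it has the right lifting property against all $\mathrm{LJ}^n_k\hookrightarrow\mathrm{L}^n_k$ ($n\ge2$, $0<k\le n$); it satisfies CRF if $W$ is weakly closed under composition and it has the right lifting property against all $\mathrm{RJ}^n_k\hookrightarrow\mathrm{R}^n_k$ ($n\ge2$, $0\le k<n$). Marked Ex: $\mathrm{sd}_+[n]$ is the nerve of the poset of non-empty subsets of $[n]$ ordered by inclusion, with $A_0\subseteq A_1$ marked iff $\max A_0=\max A_1$; $\mathrm{sd}^{\mathrm{op}}_+[n]$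 is the nerve of the opposite poset, with $A_0\supseteq A_1$ marked iff $\min A_0=\min A_1$. Both are cosimplicial objects in marked simplicial sets via direct image of subsets. $\mathrm{Ex}_+(X,W)$ is the simplicial set with $n$-simplices the marked maps $\mathrm{sd}_+[n]\to(X,W)$, and $\mathrm{Ex}^{\mathrm{op}}_+(X,W)$ the simplicial set with $n$-simplices the marked maps $\mathrm{sd}^{\mathrm{op}}_+[n]\to(X,W)$. *)

theory Defs
  imports Main
begin

text \<open>A monotone map theta : [m] -> [n], represented by its values on {0..m}.\<close>
definition mono_map :: "(nat \<Rightarrow> nat) \<Rightarrow> nat \<Rightarrow> nat \<Rightarrow> bool" where
  "mono_map \<theta> m n \<longleftrightarrow> (\<forall>i j. i \<le> j \<longrightarrow> j \<le> m \<longrightarrow> \<theta> i \<le> \<theta> j) \<and> (\<forall>i\<le>m. \<theta> i \<le> n)"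

text \<open>cells X n = set of n-simplices; act X theta m n x = X(theta)(x) for theta : [m] -> [n].\<close>
record 'a sset =
  cells :: "nat \<Rightarrow> 'a set"
  act :: "(nat \<Rightarrow> nat) \<Rightarrow> nat \<Rightarrow> nat \<Rightarrow> 'a \<Rightarrow> 'a"

definition is_sset :: "'a sset \<Rightarrow> bool" where
  "is_sset X \<longleftrightarrow>
     (\<forall>\<theta> m n x. mono_map \<theta> m n \<longrightarrow> x \<in> cells X n \<longrightarrow> act X \<theta> m n x \<in> cells X m) \<and>
     (\<forall>n x. x \<in> cells X n \<longrightarrow> act X id n n x = x) \<and>
     (\<forall>\<theta> \<eta> m n p x. mono_map \<theta> m n \<longrightarrow> mono_map \<eta> n p \<longrightarrow> x \<in> cells X p \<longrightarrow>
         act X \<theta> m n (act X \<eta> n p x) = act X (\<eta> \<circ> \<theta>) m p x) \<and>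
     (\<forall>\<theta> \<theta>' m n x. mono_map \<theta> m n \<longrightarrow> (\<forall>i\<le>m. \<theta> i = \<theta>' i) \<longrightarrow> x \<in> cells X n \<longrightarrow>
         act X \<theta> m n x = act X \<theta>' m n x)"

definition smap :: "'b sset \<Rightarrow> 'a sset \<Rightarrow> (nat \<Rightarrow> 'b \<Rightarrow> 'a) \<Rightarrow> bool" where
  "smap A X f \<longleftrightarrow>
     (\<forall>n. \<forall>x\<in>cells A n. f n x \<in> cells X n) \<and>
     (\<forall>\<theta> m n x. mono_map \<theta> m n \<longrightarrow> x \<in> cells A n \<longrightarrow> f m (act A \<theta> m n x) = act X \<theta> m n (f n x))"

text \<open>The simplicial subset of B with simplices given by the family Asub (assumed closed).\<close>
definition subsset :: "'b sset \<Rightarrow> (nat \<Rightarrow> 'b set) \<Rightarrow> 'b sset" where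
  "subsset B Asub = \<lparr>cells = Asub, act = act B\<rparr>"

definition rlp :: "'b sset \<Rightarrow> (nat \<Rightarrow> 'b set) \<Rightarrow> 'a sset \<Rightarrow> bool" where
  "rlp B Asub X \<longleftrightarrow>
     (\<forall>f. smap (subsset B Asub) X f \<longrightarrow>
        (\<exists>g. smap B X g \<and> (\<forall>n. \<forall>a\<in>Asub n. g n a = f n a)))"

definition marked_sset :: "'a sset \<Rightarrow> 'a set \<Rightarrow> bool" where
  "marked_sset X W \<longleftrightarrow> is_sset X \<and> W \<subseteq> cells X 1 \<and>
     (\<forall>x\<in>cells X 0. act X (\<lambda>_. 0) 1 0 x \<in> W)"

definition marked_map :: "'b sset \<Rightarrow> 'b set \<Rightarrow> 'a sset \<Rightarrow> 'a set \<Rightarrow> (nat \<Rightarrow> 'b \<Rightarrow> 'a) \<Rightarrow> bool" where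
  "marked_map A V X W f \<longleftrightarrow> smap A X f \<and> (\<forall>e\<in>V. f 1 e \<in> W)"

definition mrlp :: "'b sset \<Rightarrow> 'b set \<Rightarrow> (nat \<Rightarrow> 'b set) \<Rightarrow> 'a sset \<Rightarrow> 'a set \<Rightarrow> bool" where
  "mrlp B V Asub X W \<longleftrightarrow>
     (\<forall>f. marked_map (subsset B Asub) (V \<inter> Asub 1) X W f \<longrightarrow>
        (\<exists>g. marked_map B V X W g \<and> (\<forall>n. \<forall>a\<in>Asub n. g n a = f n a)))"

text \<open>n-simplices: monotone sequences s 0 \<le> ... \<le> s n in P, extended by undefined.\<close>
definition nerve :: "'p set \<Rightarrow> ('p \<Rightarrow> 'p \<Rightarrow> bool) \<Rightarrow> (nat \<Rightarrow> 'p) sset" where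
  "nerve P le = \<lparr>cells = (\<lambda>n. {s. (\<forall>i\<le>n. s i \<in> P) \<and> (\<forall>i j. i \<le> j \<longrightarrow> j \<le> n \<longrightarrow> le (s i) (s j))
                                  \<and> (\<forall>i>n. s i = undefined)}),
                act = (\<lambda>\<theta> m n s. (\<lambda>i. if i \<le> m then s (\<theta> i) else undefined))\<rparr>"

definition Delta :: "nat \<Rightarrow> (nat \<Rightarrow> nat) sset" where
  "Delta n = nerve {0..n} (\<le>)"

definition horn :: "nat \<Rightarrow> nat \<Rightarrow> nat \<Rightarrow> (nat \<Rightarrow> nat) set" where
  "horn n k m = {s \<in> cells (Delta n) m. insert k (s ` {0..m}) \<noteq> {0..n}}"

definition quasicategory :: "'a sset \<Rightarrow> bool" where
  "quasicategory X \<longleftrightarrow> is_sset X \<and> (\<forall>n k. 0 < k \<longrightarrow> k < n \<longrightarrow> rlp (Delta n) (horn n k) X)"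

definition weakly_closed :: "'a sset \<Rightarrow> 'a set \<Rightarrow> bool" where
  "weakly_closed X W \<longleftrightarrow>
     (\<forall>f. smap (subsset (Delta 2) (horn 2 1)) X f \<longrightarrow> (\<forall>e\<in>horn 2 1 1. f 1 e \<in> W) \<longrightarrow>
        (\<exists>g. smap (Delta 2) X g \<and> (\<forall>n. \<forall>a\<in>horn 2 1 n. g n a = f n a) \<and>
             (\<forall>e\<in>cells (Delta 2) 1. g 1 e \<in> W)))"

definition Lposet :: "nat \<Rightarrow> nat \<Rightarrow> nat set set" where
  "Lposet n k = {A. A \<subseteq> {0..n} \<and> k \<in> A}"

definition L :: "nat \<Rightarrow> nat \<Rightarrow> (nat \<Rightarrow> nat set) sset" where
  "L n k = nerve (Lposet n k) (\<subseteq>)"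

definition Lmark :: "nat \<Rightarrow> nat \<Rightarrow> (nat \<Rightarrow> nat set) set" where
  "Lmark n k = {s \<in> cells (L n k) 1. Max (s 0) = Max (s 1)}"

definition LJ :: "nat \<Rightarrow> nat \<Rightarrow> nat \<Rightarrow> (nat \<Rightarrow> nat set) set" where
  "LJ n k m = {s \<in> cells (L n k) m. \<forall>i\<le>m. s i \<noteq> {0..n}}"

definition R :: "nat \<Rightarrow> nat \<Rightarrow> (nat \<Rightarrow> nat set) sset" where
  "R n k = nerve (Lposet n k) (\<supseteq>)"

definition Rmark :: "nat \<Rightarrow> nat \<Rightarrow> (nat \<Rightarrow> nat set) set" where
  "Rmark n k = {s \<in> cells (R n k) 1. Min (s 0) = Min (s 1)}"

definition RJ :: "nat \<Rightarrow> nat \<Rightarrow> nat \<Rightarrow> (nat \<Rightarrow> nat set) set" where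
  "RJ n k m = {s \<in> cells (R n k) m. \<forall>i\<le>m. s i \<noteq> {0..n}}"

definition CLF :: "'a sset \<Rightarrow> 'a set \<Rightarrow> bool" where
  "CLF X W \<longleftrightarrow> weakly_closed X W \<and>
     (\<forall>n k. 2 \<le> n \<longrightarrow> 0 < k \<longrightarrow> k \<le> n \<longrightarrow> mrlp (L n k) (Lmark n k) (LJ n k) X W)"

definition CRF :: "'a sset \<Rightarrow> 'a set \<Rightarrow> bool" where
  "CRF X W \<longleftrightarrow> weakly_closed X W \<and>
     (\<forall>n k. 2 \<le> n \<longrightarrow> k < n \<longrightarrow> mrlp (R n k) (Rmark n k) (RJ n k) X W)"

definition sdposet :: "nat \<Rightarrow> nat set set" where
  "sdposet n = {A. A \<noteq> {} \<and> A \<subseteq> {0..n}}"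

definition sd :: "nat \<Rightarrow> (nat \<Rightarrow> nat set) sset" where
  "sd n = nerve (sdposet n) (\<subseteq>)"

definition sdmark :: "nat \<Rightarrow> (nat \<Rightarrow> nat set) set" where
  "sdmark n = {s \<in> cells (sd n) 1. Max (s 0) = Max (s 1)}"

definition sdop :: "nat \<Rightarrow> (nat \<Rightarrow> nat set) sset" where
  "sdop n = nerve (sdposet n) (\<supseteq>)"

definition sdopmark :: "nat \<Rightarrow> (nat \<Rightarrow> nat set) set" where
  "sdopmark n = {s \<in> cells (sdop n) 1. Min (s 0) = Min (s 1)}"

text \<open>Generic Ex construction for a cosimplicial family of (nerves of) subset posets, whose
  cosimplicial structure is direct image of subsets. n-simplices are marked maps C n -> (X,W),
  represented extensionally (undefined off the simplices of C n).\<close>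
definition ExGen :: "(nat \<Rightarrow> (nat \<Rightarrow> nat set) sset) \<Rightarrow> (nat \<Rightarrow> (nat \<Rightarrow> nat set) set) \<Rightarrow>
    'a sset \<Rightarrow> 'a set \<Rightarrow> (nat \<Rightarrow> (nat \<Rightarrow> nat set) \<Rightarrow> 'a) sset" where
  "ExGen C M X W =
     \<lparr>cells = (\<lambda>n. {f. marked_map (C n) (M n) X W f \<and>
                       (\<forall>k s. s \<notin> cells (C n) k \<longrightarrow> f k s = undefined)}),
      act = (\<lambda>\<theta> m n f. (\<lambda>k s. if s \<in> cells (C m) k
                                 then f k (\<lambda>i. if i \<le> k then \<theta> ` (s i) else undefined)
                                 else undefined))\<rparr>"

definition Ex_plus :: "'a sset \<Rightarrow> 'a set \<Rightarrow> (nat \<Rightarrow> (nat \<Rightarrow> nat set) \<Rightarrow> 'a) sset" where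
  "Ex_plus X W = ExGen sd sdmark X W"

definition Ex_op_plus :: "'a sset \<Rightarrow> 'a set \<Rightarrow> (nat \<Rightarrow> (nat \<Rightarrow> nat set) \<Rightarrow> 'a) sset" where
  "Ex_op_plus X W = ExGen sdop sdopmark X W"

end

theory Submission
  imports Defs
begin


lemma cells_nerve: "c \<in> cells (nerve P le) m \<longleftrightarrow>
   (\<forall>i\<le>m. c i \<in> P) \<and> (\<forall>i j. i \<le> j \<longrightarrow> j \<le> m \<longrightarrow> le (c i) (c j)) \<and> (\<forall>i>m. c i = undefined)"
  by (simp add: nerve_def)

lemma act_nerve: "act (nerve P le) \<theta> m n c = (\<lambda>i. if i \<le> m then c (\<theta> i) else undefined)"
  by (simp add: nerve_def)

lemma act_subsset[simp]: "act (subsset B A) = act B" and cells_subsset[simp]: "cells (subsset B A) = A"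
  by (simp_all add: subsset_def)

lemma mono_mapD: "mono_map \<theta> m n \<Longrightarrow> i \<le> j \<Longrightarrow> j \<le> m \<Longrightarrow> \<theta> i \<le> \<theta> j"
  "mono_map \<theta> m n \<Longrightarrow> i \<le> m \<Longrightarrow> \<theta> i \<le> n"
  by (auto simp: mono_map_def)

lemma act_nerve_cells: "mono_map \<theta> m n \<Longrightarrow> c \<in> cells (nerve P le) n \<Longrightarrow> act (nerve P le) \<theta> m n c \<in> cells (nerve P le) m"
  unfolding cells_nerve act_nerve by (auto simp: mono_map_def)

lemma is_sset_nerve: "is_sset (nerve P le)"
  unfolding is_sset_def
proof (intro conjI allI impI)
  fix \<theta> m n x assume "mono_map \<theta> m n" "x \<in> cells (nerve P le) n"
  then show "act (nerve P le) \<theta> m n x \<in> cells (nerve P le) m" by (rule act_nerve_cells)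
next
  fix n x assume "x \<in> cells (nerve P le) n"
  then show "act (nerve P le) id n n x = x" unfolding cells_nerve act_nerve by (auto simp: fun_eq_iff)
next
  fix \<theta> \<eta> m n p x assume "mono_map \<theta> m n" "mono_map \<eta> n p" "x \<in> cells (nerve P le) p"
  then show "act (nerve P le) \<theta> m n (act (nerve P le) \<eta> n p x) = act (nerve P le) (\<eta> \<circ> \<theta>) m p x"
    unfolding act_nerve by (auto simp: fun_eq_iff mono_map_def)
next
  fix \<theta> \<theta>' m n x assume "mono_map \<theta> m n" "\<forall>i\<le>m. \<theta> i = \<theta>' i"
  then show "act (nerve P le) \<theta> m n x = act (nerve P le) \<theta>' m n x"
    unfolding act_nerve by (auto simp: fun_eq_iff)
qed

definition sub :: "('p \<Rightarrow> 'p \<Rightarrow> bool) \<Rightarrow> 'p set \<Rightarrow> 'p set set \<Rightarrow> nat \<Rightarrow> (nat \<Rightarrow> 'p) set" where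
  "sub le P D m = {c \<in> cells (nerve P le) m. c ` {0..m} \<in> D}"

definition mmap where
  "mmap le P MQ D X W G \<longleftrightarrow> marked_map (subsset (nerve P le) (sub le P D)) (MQ \<inter> sub le P D 1) X W G"

lemma mmap_mono:
  assumes "mmap le P MQ D' X W G" "\<And>m. sub le P D m \<subseteq> sub le P D' m"
  shows "mmap le P MQ D X W G"
  using assms unfolding mmap_def marked_map_def smap_def by (auto; blast)

lemma rlp_mrlp:
  assumes "rlp B A X" "V \<subseteq> A 1"
  shows "mrlp B V A X W"
  unfolding mrlp_def
proof (intro allI impI)
  fix f assume f: "marked_map (subsset B A) (V \<inter> A 1) X W f"
  then have "smap (subsset B A) X f" by (simp add: marked_map_def)
  with assms(1) obtain g where g: "smap B X g" "\<forall>n. \<forall>a\<in>A n. g n a = f n a"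
    unfolding rlp_def by blast
  have "\<forall>e\<in>V. g 1 e \<in> W"
    using g(2) f assms(2) unfolding marked_map_def by auto
  with g show "\<exists>g. marked_map B V X W g \<and> (\<forall>n. \<forall>a\<in>A n. g n a = f n a)"
    unfolding marked_map_def by blast
qed

lemma sub_iff: "c \<in> sub le P D m \<longleftrightarrow> c \<in> cells (nerve P le) m \<and> c ` {0..m} \<in> D"
  by (simp add: sub_def)

lemma attach:
  fixes e :: "'k \<Rightarrow> 'p"
  assumes e_in: "e ` Ks \<subseteq> P"
  and e_ord: "\<forall>a\<in>Ks. \<forall>b\<in>Ks. le (e a) (e b) \<longleftrightarrow> leK a b"
  and G: "mmap le P MQ D X W G"
  and Dclosed: "\<forall>m c \<theta> p. c \<in> cells (nerve P le) m \<longrightarrow> c ` {0..m} \<in> D \<longrightarrow> mono_map \<theta> p m \<longrightarrow> (act (nerve P le) \<theta> p m c) ` {0..p} \<in> D"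
  and pat: "\<forall>m s. s \<in> cells (nerve Ks leK) m \<longrightarrow> (e ` s ` {0..m} \<in> D \<longleftrightarrow> s \<in> DK m)"
  and DKc: "\<forall>m. DK m \<subseteq> cells (nerve Ks leK) m"
  and marks: "\<forall>s \<in> cells (nerve Ks leK) 1. s \<in> VK \<longleftrightarrow> (\<lambda>i. if i \<le> 1 then e (s i) else undefined) \<in> MQ"
  and lift: "mrlp (nerve Ks leK) VK DK X W"
  shows "\<exists>G'. mmap le P MQ (D \<union> {C. C \<subseteq> e ` Ks}) X W G' \<and> (\<forall>m. \<forall>c\<in>sub le P D m. G' m c = G m c)"
proof -
  define K where "K = nerve Ks leK"
  define Q where "Q = nerve P le"
  define ee where "ee m s = (\<lambda>i. if i \<le> m then e (s i) else undefined)" for m :: nat and s :: "nat \<Rightarrow> 'k"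
  define ei where "ei m c = (\<lambda>i. if i \<le> m then inv_into Ks e (c i) else undefined)" for m :: nat and c :: "nat \<Rightarrow> 'p"
  define f where "f m s = G m (ee m s)" for m :: nat and s
  have Gm: "marked_map (subsset Q (sub le P D)) (MQ \<inter> sub le P D 1) X W G"
    using G by (simp add: mmap_def Q_def)
  have ee_sub: "ee m s \<in> sub le P D m" if "s \<in> DK m" for m s
  proof -
    have s: "s \<in> cells K m" using that DKc K_def by auto
    then have "ee m s \<in> cells Q m" using e_in e_ord unfolding Q_def K_def cells_nerve ee_def by auto
    moreover have "ee m s ` {0..m} = e ` s ` {0..m}" by (auto simp: ee_def)
    ultimately show ?thesis using pat s that unfolding sub_iff Q_def K_def by auto
  qed
  have ee_act: "ee p (act K \<theta> p m s) = act Q \<theta> p m (ee m s)" if "mono_map \<theta> p m" for \<theta> p m s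
    using that unfolding ee_def K_def Q_def act_nerve by (auto simp: fun_eq_iff mono_map_def)
  have fm: "marked_map (subsset K DK) (VK \<inter> DK 1) X W f"
    unfolding marked_map_def smap_def
  proof (intro conjI allI impI ballI)
    fix n x assume "x \<in> cells (subsset K DK) n"
    then show "f n x \<in> cells X n" using ee_sub Gm unfolding f_def marked_map_def smap_def by auto
  next
    fix \<theta> m n x assume th: "mono_map \<theta> m n" and x: "x \<in> cells (subsset K DK) n"
    then show "f m (act (subsset K DK) \<theta> m n x) = act X \<theta> m n (f n x)"
      using ee_sub[of x n] Gm ee_act[OF th] unfolding f_def marked_map_def smap_def by auto
  next
    fix x assume x: "x \<in> VK \<inter> DK 1"
    then have "x \<in> cells K 1" using DKc K_def by auto
    then have "ee 1 x \<in> MQ" using marks x unfolding K_def ee_def by auto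
    then show "f 1 x \<in> W" using ee_sub[of x 1] x Gm unfolding f_def marked_map_def by auto
  qed
  then obtain g where g: "marked_map K VK X W g" and gf: "\<forall>n. \<forall>a\<in>DK n. g n a = f n a"
    using lift unfolding mrlp_def K_def by blast
  define G' where "G' m c = (if c ` {0..m} \<in> D then G m c else g m (ei m c))" for m :: nat and c
  have ei_cells: "ei m c \<in> cells K m" and ee_ei: "ee m (ei m c) = c"
    if "c \<in> cells Q m" "c ` {0..m} \<subseteq> e ` Ks" for m c
  proof -
    have ci: "c i \<in> e ` Ks" if "i \<le> m" for i using that \<open>c ` {0..m} \<subseteq> e ` Ks\<close> by auto
    have inv: "inv_into Ks e (c i) \<in> Ks" "e (inv_into Ks e (c i)) = c i" if "i \<le> m" for i
      using ci[OF that] by (auto intro: inv_into_into f_inv_into_f)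
    show "ei m c \<in> cells K m"
      unfolding K_def cells_nerve ei_def
    proof (intro conjI allI impI)
      fix i j assume "i \<le> j" "j \<le> m"
      then have "le (c i) (c j)" using that(1) unfolding Q_def cells_nerve by auto
      then show "leK (if i \<le> m then inv_into Ks e (c i) else undefined) (if j \<le> m then inv_into Ks e (c j) else undefined)"
      proof -
        have "le (e (inv_into Ks e (c i))) (e (inv_into Ks e (c j)))"
          using inv[of i] inv[of j] \<open>le (c i) (c j)\<close> \<open>i \<le> j\<close> \<open>j \<le> m\<close> by simp
        moreover have "inv_into Ks e (c i) \<in> Ks" "inv_into Ks e (c j) \<in> Ks"
          using inv(1) \<open>i \<le> j\<close> \<open>j \<le> m\<close> by auto
        ultimately show ?thesis using e_ord \<open>i \<le> j\<close> \<open>j \<le> m\<close> by auto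
      qed
    qed (use inv in auto)
    show "ee m (ei m c) = c" using inv that(1) unfolding ee_def ei_def Q_def cells_nerve by (auto simp: fun_eq_iff)
  qed
  have gcell: "g m s \<in> cells X m" if "s \<in> cells K m" for m s
    using g that unfolding marked_map_def smap_def by auto
  have Gcell: "G m c \<in> cells X m" if "c \<in> sub le P D m" for m c
    using Gm that unfolding marked_map_def smap_def by auto
  have G'm: "mmap le P MQ (D \<union> {C. C \<subseteq> e ` Ks}) X W G'"
    unfolding mmap_def marked_map_def smap_def
  proof (intro conjI allI impI ballI)
    fix n x assume x: "x \<in> cells (subsset (nerve P le) (sub le P (D \<union> {C. C \<subseteq> e ` Ks}))) n"
    then have xc: "x \<in> cells Q n" and xD: "x ` {0..n} \<in> D \<or> x ` {0..n} \<subseteq> e ` Ks"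
      by (simp_all add: sub_iff Q_def)
    show "G' n x \<in> cells X n"
    proof (cases "x ` {0..n} \<in> D")
      case True
      then have "x \<in> sub le P D n" using xc by (simp add: sub_iff Q_def)
      then have "G n x \<in> cells X n" by (rule Gcell)
      then show ?thesis using True by (simp add: G'_def)
    next
      case False
      then have xe: "x ` {0..n} \<subseteq> e ` Ks" using xD by auto
      have "G' n x = g n (ei n x)" using False by (simp add: G'_def)
      then show ?thesis using gcell[OF ei_cells[OF xc xe]] by simp
    qed
  next
    fix \<theta> m n x assume th: "mono_map \<theta> m n" and
      x: "x \<in> cells (subsset (nerve P le) (sub le P (D \<union> {C. C \<subseteq> e ` Ks}))) n"
    then have xc: "x \<in> cells Q n" and xD: "x ` {0..n} \<in> D \<or> x ` {0..n} \<subseteq> e ` Ks"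
      by (simp_all add: sub_iff Q_def)
    define y where "y = act Q \<theta> m n x"
    have yc: "y \<in> cells Q m" using act_nerve_cells[OF th] xc unfolding y_def Q_def by auto
    have yimg: "y ` {0..m} \<subseteq> x ` {0..n}" using th unfolding y_def Q_def act_nerve mono_map_def by auto
    show "G' m (act (subsset (nerve P le) (sub le P (D \<union> {C. C \<subseteq> e ` Ks}))) \<theta> m n x) =
        act X \<theta> m n (G' n x)"
    proof -
      have lhs: "act (subsset (nerve P le) (sub le P (D \<union> {C. C \<subseteq> e ` Ks}))) \<theta> m n x = y"
        by (simp add: y_def Q_def)
      show ?thesis
      proof (cases "x ` {0..n} \<in> D")
        case True
        then have yD: "y ` {0..m} \<in> D" using Dclosed xc th unfolding y_def Q_def by blast
        have "G m y = act X \<theta> m n (G n x)"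
          using Gm th xc True unfolding marked_map_def smap_def y_def by (auto simp: sub_iff Q_def)
        then show ?thesis using True yD lhs by (simp add: G'_def)
      next
        case False
        then have xe: "x ` {0..n} \<subseteq> e ` Ks" using xD by auto
        have ye: "y ` {0..m} \<subseteq> e ` Ks" using xe yimg by auto
        have eiy: "ei m y = act K \<theta> m n (ei n x)"
          using th unfolding ei_def y_def K_def Q_def act_nerve mono_map_def by (auto simp: fun_eq_iff)
        have gnat: "g m (act K \<theta> m n (ei n x)) = act X \<theta> m n (g n (ei n x))"
          using g th ei_cells[OF xc xe] unfolding marked_map_def smap_def by auto
        show ?thesis
        proof (cases "y ` {0..m} \<in> D")
          case True
          have "ei m y \<in> DK m"
          proof -
            have "e ` (ei m y) ` {0..m} = ee m (ei m y) ` {0..m}" by (auto simp: ee_def)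
            also have "\<dots> = y ` {0..m}" using ee_ei[OF yc ye] by simp
            finally have "e ` (ei m y) ` {0..m} \<in> D" using True by simp
            then show ?thesis using pat ei_cells[OF yc ye] unfolding K_def by blast
          qed
          then have "g m (ei m y) = G m y" using gf ee_ei[OF yc ye] by (simp add: f_def)
          moreover have "G' m y = G m y" using True by (simp add: G'_def)
          moreover have "G' n x = g n (ei n x)" using False by (simp add: G'_def)
          ultimately show ?thesis using lhs gnat eiy by simp
        next
          case False
          have "G' m y = g m (ei m y)" using False by (simp add: G'_def)
          moreover have "G' n x = g n (ei n x)" using \<open>x ` {0..n} \<notin> D\<close> by (simp add: G'_def)
          ultimately show ?thesis using lhs gnat eiy by simp
        qed
      qed
    qed
  next
    fix x assume x: "x \<in> MQ \<inter> sub le P (D \<union> {C. C \<subseteq> e ` Ks}) 1"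
    then have xc: "x \<in> cells Q 1" and xD: "x ` {0..1} \<in> D \<or> x ` {0..1} \<subseteq> e ` Ks"
      by (simp_all add: sub_iff Q_def)
    show "G' 1 x \<in> W"
    proof (cases "x ` {0..1} \<in> D")
      case True
      then have "x \<in> MQ \<inter> sub le P D 1" using x xc unfolding Int_iff sub_iff Q_def by blast
      then have "G 1 x \<in> W" using Gm unfolding marked_map_def by blast
      then show ?thesis using True by (simp add: G'_def)
    next
      case False
      then have xe: "x ` {0..1} \<subseteq> e ` Ks" using xD by blast
      have "ee 1 (ei 1 x) \<in> MQ" using ee_ei[OF xc xe] x by simp
      then have "(\<lambda>i. if i \<le> 1 then e (ei 1 x i) else undefined) \<in> MQ" by (simp only: ee_def)
      then have "ei 1 x \<in> VK" using marks ei_cells[OF xc xe] unfolding K_def by blast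
      then have "g 1 (ei 1 x) \<in> W" using g unfolding marked_map_def by blast
      then show ?thesis using False by (simp add: G'_def)
    qed
  qed
  moreover have "\<forall>m. \<forall>c\<in>sub le P D m. G' m c = G m c" by (auto simp: G'_def sub_iff)
  ultimately show ?thesis by blast
qed



definition push :: "(nat \<Rightarrow> nat) \<Rightarrow> nat \<Rightarrow> (nat \<Rightarrow> nat set) \<Rightarrow> (nat \<Rightarrow> nat set)" where
  "push \<theta> k s = (\<lambda>i. if i \<le> k then \<theta> ` (s i) else undefined)"

lemma Max_mono_image:
  assumes "finite A" "A \<noteq> {}" "\<forall>x\<in>A. \<forall>y\<in>A. x \<le> y \<longrightarrow> \<theta> x \<le> (\<theta> y::nat)"
  shows "Max (\<theta> ` A) = \<theta> (Max A)"
proof (rule Max_eqI)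
  show "finite (\<theta> ` A)" using assms by simp
  show "\<theta> (Max A) \<in> \<theta> ` A" using assms Max_in by auto
  fix y assume "y \<in> \<theta> ` A"
  then obtain x where "x \<in> A" "y = \<theta> x" by auto
  then show "y \<le> \<theta> (Max A)" using assms Max_in[OF assms(1,2)] Max_ge[OF assms(1)] by auto
qed

lemma Min_mono_image:
  assumes "finite A" "A \<noteq> {}" "\<forall>x\<in>A. \<forall>y\<in>A. x \<le> y \<longrightarrow> \<theta> x \<le> (\<theta> y::nat)"
  shows "Min (\<theta> ` A) = \<theta> (Min A)"
proof (rule Min_eqI)
  show "finite (\<theta> ` A)" using assms by simp
  show "\<theta> (Min A) \<in> \<theta> ` A" using assms Min_in by auto
  fix y assume "y \<in> \<theta> ` A"
  then obtain x where "x \<in> A" "y = \<theta> x" by auto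
  then show "\<theta> (Min A) \<le> y" using assms Min_in[OF assms(1,2)] Min_le[OF assms(1)] by auto
qed

locale ordset =
  fixes le :: "nat set \<Rightarrow> nat set \<Rightarrow> bool" and mu :: "nat set \<Rightarrow> nat"
  assumes le_cases: "(le = (\<subseteq>) \<and> mu = Max) \<or> (le = (\<supseteq>) \<and> mu = Min)"
begin

definition Cg :: "nat \<Rightarrow> (nat \<Rightarrow> nat set) sset" where "Cg n = nerve (sdposet n) le"
definition Mg :: "nat \<Rightarrow> (nat \<Rightarrow> nat set) set" where "Mg n = {s \<in> cells (Cg n) 1. mu (s 0) = mu (s 1)}"
definition Ex :: "'a sset \<Rightarrow> 'a set \<Rightarrow> (nat \<Rightarrow> (nat \<Rightarrow> nat set) \<Rightarrow> 'a) sset" where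
  "Ex X W = ExGen Cg Mg X W"

lemma le_image: "le A B \<Longrightarrow> le (f ` A) (f ` B)"
  using le_cases by auto

lemma le_refl: "le A A" using le_cases by auto
lemma le_trans: "le A B \<Longrightarrow> le B C \<Longrightarrow> le A C" using le_cases by auto
lemma le_antisym: "le A B \<Longrightarrow> le B A \<Longrightarrow> A = B" using le_cases by auto
lemma le_comp: "le A B \<Longrightarrow> A \<subseteq> B \<or> B \<subseteq> A" using le_cases by auto

lemma mu_image:
  assumes "finite A" "A \<noteq> {}" "\<forall>x\<in>A. \<forall>y\<in>A. x \<le> y \<longrightarrow> \<theta> x \<le> \<theta> y"
  shows "mu (\<theta> ` A) = \<theta> (mu A)"
  using le_cases Max_mono_image[OF assms] Min_mono_image[OF assms] by auto

lemma cells_Cg: "s \<in> cells (Cg n) k \<longleftrightarrow> (\<forall>i\<le>k. s i \<noteq> {} \<and> s i \<subseteq> {0..n}) \<and>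
   (\<forall>i j. i \<le> j \<longrightarrow> j \<le> k \<longrightarrow> le (s i) (s j)) \<and> (\<forall>i>k. s i = undefined)"
  by (auto simp: Cg_def cells_nerve sdposet_def)

lemma push_cells:
  assumes "mono_map \<theta> m n" "s \<in> cells (Cg m) k"
  shows "push \<theta> k s \<in> cells (Cg n) k"
  using assms unfolding cells_Cg push_def mono_map_def
  by (auto intro: le_image) (meson atLeastAtMost_iff subset_iff)+

lemma push_Mg:
  assumes "mono_map \<theta> m n" "s \<in> Mg m"
  shows "push \<theta> 1 s \<in> Mg n"
proof -
  have s: "s \<in> cells (Cg m) 1" "mu (s 0) = mu (s 1)" using assms(2) by (auto simp: Mg_def)
  have fin: "finite (s i)" "s i \<noteq> {}" "s i \<subseteq> {0..m}" if "i \<le> 1" for i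
    using s(1) that unfolding cells_Cg by (auto intro: finite_subset)
  have mono: "\<forall>x\<in>s i. \<forall>y\<in>s i. x \<le> y \<longrightarrow> \<theta> x \<le> \<theta> y" if "i \<le> 1" for i
    using fin(3)[OF that] assms(1) unfolding mono_map_def by auto
  have "mu (\<theta> ` s 0) = mu (\<theta> ` s 1)"
    using mu_image[OF fin(1,2) mono, of 0] mu_image[OF fin(1,2) mono, of 1] s(2) by simp
  then show ?thesis using push_cells[OF assms(1) s(1)] by (simp add: Mg_def push_def)
qed

lemma push_act:
  assumes "mono_map \<eta> j k"
  shows "push \<theta> j (act (Cg m) \<eta> j k s) = act (Cg n) \<eta> j k (push \<theta> k s)"
  using assms by (auto simp: push_def Cg_def act_nerve fun_eq_iff mono_map_def)

lemma push_push:
  assumes "mono_map \<theta> p m" "s \<in> cells (Cg p) j"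
  shows "push \<eta> j (push \<theta> j s) = push (\<lambda>i. if i \<le> p then \<eta> (\<theta> i) else undefined) j s"
proof -
  have "s i \<subseteq> {0..p}" if "i \<le> j" for i using assms(2) that unfolding cells_Cg by auto
  then show ?thesis by (auto simp: push_def fun_eq_iff image_image) (force simp: subset_iff)+
qed

lemma cells_Ex: "f \<in> cells (Ex X W) n \<longleftrightarrow> marked_map (Cg n) (Mg n) X W f \<and>
    (\<forall>k s. s \<notin> cells (Cg n) k \<longrightarrow> f k s = undefined)"
  by (simp add: Ex_def ExGen_def)

lemma act_Ex: "act (Ex X W) \<theta> m n f = (\<lambda>k s. if s \<in> cells (Cg m) k then f k (push \<theta> k s) else undefined)"
  unfolding Ex_def ExGen_def push_def by simp

lemma push_comp:
  assumes "s \<in> cells (Cg m) k"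
  shows "push \<eta> k (push \<theta> k s) = push (\<eta> \<circ> \<theta>) k s"
  using assms by (auto simp: push_def fun_eq_iff image_image)

lemma push_cong:
  assumes "s \<in> cells (Cg m) k" "\<forall>i\<le>m. \<theta> i = \<theta>' i"
  shows "push \<theta> k s = push \<theta>' k s"
proof -
  have "s i \<subseteq> {0..m}" if "i \<le> k" for i using assms(1) that unfolding cells_Cg by auto
  then show ?thesis using assms(2) unfolding push_def fun_eq_iff
    by (auto simp: image_def) (metis atLeastAtMost_iff subsetD)+
qed

lemma push_id:
  assumes "s \<in> cells (Cg m) k"
  shows "push id k s = s"
  using assms unfolding cells_Cg push_def by (auto simp: fun_eq_iff)

lemma act_Ex_cells:
  assumes th: "mono_map \<theta> m n" and f: "f \<in> cells (Ex X W) n"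
  shows "act (Ex X W) \<theta> m n f \<in> cells (Ex X W) m"
proof -
  have fm: "marked_map (Cg n) (Mg n) X W f" using f by (simp add: cells_Ex)
  show ?thesis unfolding cells_Ex act_Ex marked_map_def smap_def
  proof (intro conjI allI impI ballI)
    fix k s assume "s \<in> cells (Cg m) k"
    then show "(if s \<in> cells (Cg m) k then f k (push \<theta> k s) else undefined) \<in> cells X k"
      using push_cells[OF th] fm unfolding marked_map_def smap_def by auto
  next
    fix \<eta> j k s assume et: "mono_map \<eta> j k" and s: "s \<in> cells (Cg m) k"
    have s': "act (Cg m) \<eta> j k s \<in> cells (Cg m) j" using act_nerve_cells[OF et] s by (simp add: Cg_def)
    have "f j (push \<theta> j (act (Cg m) \<eta> j k s)) = f j (act (Cg n) \<eta> j k (push \<theta> k s))"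
      using push_act[OF et] by metis
    also have "\<dots> = act X \<eta> j k (f k (push \<theta> k s))"
      using fm push_cells[OF th s] et unfolding marked_map_def smap_def by blast
    finally have "f j (push \<theta> j (act (Cg m) \<eta> j k s)) = act X \<eta> j k (f k (push \<theta> k s))" .
    then show "(if act (Cg m) \<eta> j k s \<in> cells (Cg m) j then f j (push \<theta> j (act (Cg m) \<eta> j k s)) else undefined) =
        act X \<eta> j k (if s \<in> cells (Cg m) k then f k (push \<theta> k s) else undefined)"
      using s s' by simp
  next
    fix e assume e: "e \<in> Mg m"
    then have "e \<in> cells (Cg m) 1" by (simp add: Mg_def)
    then show "(if e \<in> cells (Cg m) 1 then f 1 (push \<theta> 1 e) else undefined) \<in> W"
      using push_Mg[OF th e] fm unfolding marked_map_def by auto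
  qed auto
qed

lemma is_sset_Ex: "is_sset (Ex X W)"
  unfolding is_sset_def
proof (intro conjI allI impI)
  fix \<theta> m n x assume "mono_map \<theta> m n" "x \<in> cells (Ex X W) n"
  then show "act (Ex X W) \<theta> m n x \<in> cells (Ex X W) m" by (rule act_Ex_cells)
next
  fix n x assume x: "x \<in> cells (Ex X W) n"
  show "act (Ex X W) id n n x = x"
    unfolding act_Ex fun_eq_iff using x push_id by (auto simp: cells_Ex)
next
  fix \<theta> \<eta> m n p x assume th: "mono_map \<theta> m n" and et: "mono_map \<eta> n p" and x: "x \<in> cells (Ex X W) p"
  show "act (Ex X W) \<theta> m n (act (Ex X W) \<eta> n p x) = act (Ex X W) (\<eta> \<circ> \<theta>) m p x"
    unfolding act_Ex fun_eq_iff using push_cells[OF th] push_comp by auto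
next
  fix \<theta> \<theta>' m n x assume "mono_map \<theta> m n" "\<forall>i\<le>m. \<theta> i = \<theta>' i"
  then show "act (Ex X W) \<theta> m n x = act (Ex X W) \<theta>' m n x"
    unfolding act_Ex fun_eq_iff using push_cong by (metis (no_types, lifting))
qed

end



lemma cells_Delta: "s \<in> cells (Delta n) m \<longleftrightarrow> (\<forall>i\<le>m. s i \<le> n) \<and> (\<forall>i j. i \<le> j \<longrightarrow> j \<le> m \<longrightarrow> s i \<le> s j) \<and> (\<forall>i>m. s i = undefined)"
  by (auto simp: Delta_def cells_nerve)

lemma act_Delta: "act (Delta n) \<theta> m k s = (\<lambda>i. if i \<le> m then s (\<theta> i) else undefined)"
  by (simp add: Delta_def act_nerve)

lemma Delta_mono_map: "s \<in> cells (Delta n) m \<Longrightarrow> mono_map s m n"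
  by (auto simp: cells_Delta mono_map_def)

definition rt :: "nat set \<Rightarrow> nat \<Rightarrow> nat" where
  "rt S i = (if \<exists>x\<in>S. x \<le> i then Max {x\<in>S. x \<le> i} else Min S)"

definition rho :: "nat \<Rightarrow> nat set \<Rightarrow> nat \<Rightarrow> nat" where
  "rho n S = (\<lambda>i. if i \<le> n then rt S i else undefined)"

lemma rt_in: assumes "finite S" "S \<noteq> {}" shows "rt S i \<in> S"
proof (cases "\<exists>x\<in>S. x \<le> i")
  case True
  then have "{x\<in>S. x \<le> i} \<noteq> {}" "finite {x\<in>S. x \<le> i}" using assms by auto
  then have "Max {x\<in>S. x \<le> i} \<in> {x\<in>S. x \<le> i}" by (rule Max_in[rotated])
  then show ?thesis using True by (simp add: rt_def)
next
  case False then show ?thesis using Min_in[OF assms] by (simp add: rt_def)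
qed

lemma rt_fix: "finite S \<Longrightarrow> x \<in> S \<Longrightarrow> rt S x = x"
  unfolding rt_def by (auto intro!: Max_eqI)

lemma rt_mono: assumes "finite S" "S \<noteq> {}" "i \<le> j" shows "rt S i \<le> rt S j"
proof (cases "\<exists>x\<in>S. x \<le> i")
  case True
  then have "\<exists>x\<in>S. x \<le> j" using assms(3) by (meson order_trans)
  moreover have "{x\<in>S. x \<le> i} \<subseteq> {x\<in>S. x \<le> j}" using assms(3) by auto
  ultimately show ?thesis using True assms(1) unfolding rt_def
    by (auto intro!: Max_mono)
next
  case False
  have "Min S \<le> rt S j" using rt_in[OF assms(1,2), of j] Min_le[OF assms(1)] by blast
  then show ?thesis using False unfolding rt_def by simp
qed

lemma rho_cells: assumes "S \<subseteq> {0..n}" "S \<noteq> {}" shows "rho n S \<in> cells (Delta n) n"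
proof -
  have fin: "finite S" using assms(1) finite_subset by blast
  have "rt S i \<le> n" for i using rt_in[OF fin assms(2), of i] assms(1) by auto
  then show ?thesis unfolding cells_Delta rho_def using rt_mono[OF fin assms(2)]
    by auto
qed

lemma rho_img: assumes "S \<subseteq> {0..n}" "S \<noteq> {}" shows "rho n S ` {0..n} = S"
proof -
  have fin: "finite S" using assms(1) finite_subset by blast
  show ?thesis
  proof
    show "rho n S ` {0..n} \<subseteq> S" using rt_in[OF fin assms(2)] by (auto simp: rho_def)
    show "S \<subseteq> rho n S ` {0..n}"
    proof
      fix x assume "x \<in> S"
      then have "rho n S x = x" "x \<in> {0..n}" using rt_fix[OF fin] assms(1) by (auto simp: rho_def)
      then show "x \<in> rho n S ` {0..n}" by (metis imageI)
    qed
  qed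
qed

lemma rho_fix: assumes "S \<subseteq> {0..n}" "x \<in> S" shows "rho n S x = x"
  using assms rt_fix[of S x] finite_subset[OF assms(1)] by (auto simp: rho_def)

context ordset
begin

lemma push_map:
  assumes F: "mmap le (sdposet n) (Mg n) D X W F"
  and A: "\<forall>m. A m \<subseteq> cells (Delta n) m"
  and AD: "\<forall>m s j d. s \<in> A m \<longrightarrow> d \<in> cells (Cg m) j \<longrightarrow> push s j d ` {0..j} \<in> D"
  shows "smap (subsset (Delta n) A) (Ex X W) (\<lambda>m s j d. if d \<in> cells (Cg m) j then F j (push s j d) else undefined)"
proof -
  have Fm: "marked_map (subsset (Cg n) (sub le (sdposet n) D)) (Mg n \<inter> sub le (sdposet n) D 1) X W F"
    using F by (simp add: mmap_def Cg_def)
  have psub: "push s j d \<in> sub le (sdposet n) D j" if "s \<in> A m" "d \<in> cells (Cg m) j" for s m j d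
  proof -
    have "s \<in> cells (Delta n) m" using A that(1) by auto
    then have "push s j d \<in> cells (Cg n) j" using push_cells[OF Delta_mono_map that(2)] by blast
    then show ?thesis using AD that by (simp add: sub_iff Cg_def)
  qed
  define g where "g = (\<lambda>m s j d. if d \<in> cells (Cg m) j then F j (push s j d) else undefined)"
  have gc: "g m s \<in> cells (Ex X W) m" if s: "s \<in> A m" for m s
    unfolding cells_Ex marked_map_def smap_def
  proof (intro conjI allI impI ballI)
    fix j d assume "d \<in> cells (Cg m) j"
    then show "g m s j d \<in> cells X j" using psub[OF s] Fm unfolding g_def marked_map_def smap_def by auto
  next
    fix \<eta> j k d assume et: "mono_map \<eta> j k" and d: "d \<in> cells (Cg m) k"
    have d': "act (Cg m) \<eta> j k d \<in> cells (Cg m) j" using act_nerve_cells[OF et] d by (simp add: Cg_def)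
    have "F j (push s j (act (Cg m) \<eta> j k d)) = F j (act (Cg n) \<eta> j k (push s k d))"
      using push_act[OF et] by metis
    also have "\<dots> = act X \<eta> j k (F k (push s k d))"
      using Fm psub[OF s d] et unfolding marked_map_def smap_def by auto
    finally show "g m s j (act (Cg m) \<eta> j k d) = act X \<eta> j k (g m s k d)"
      using d d' by (simp add: g_def)
  next
    fix e assume e: "e \<in> Mg m"
    then have "e \<in> cells (Cg m) 1" by (simp add: Mg_def)
    moreover have "push s 1 e \<in> Mg n" using push_Mg[OF Delta_mono_map e] A s by auto
    ultimately show "g m s 1 e \<in> W" using psub[OF s] Fm unfolding g_def marked_map_def by auto
  qed (simp add: g_def)
  show ?thesis
    unfolding smap_def g_def[symmetric]
  proof (intro conjI allI impI ballI)
    fix m s assume "s \<in> cells (subsset (Delta n) A) m"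
    then show "g m s \<in> cells (Ex X W) m" using gc by simp
  next
    fix \<theta> p m s assume th: "mono_map \<theta> p m" and s: "s \<in> cells (subsset (Delta n) A) m"
    show "g p (act (subsset (Delta n) A) \<theta> p m s) = act (Ex X W) \<theta> p m (g m s)"
      unfolding act_Ex act_subsset act_Delta fun_eq_iff g_def
      using push_cells[OF th] push_push[OF th] by auto
  qed
qed

lemma principle:
  assumes f: "smap (subsset (Delta n) (horn n k)) (Ex X W) f"
  and s: "s \<in> horn n k m" and r: "r \<in> horn n k n" and fx: "\<forall>i\<le>m. r (s i) = s i"
  and d: "d \<in> cells (Cg m) j"
  shows "f m s j d = f n r j (push s j d)"
proof -
  have sc: "s \<in> cells (Delta n) m" using s by (simp add: horn_def)
  have ms: "mono_map s m n" by (rule Delta_mono_map[OF sc])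
  have "act (Delta n) s m n r = s" using fx sc unfolding act_Delta cells_Delta by (auto simp: fun_eq_iff)
  then have "f m s = act (Ex X W) s m n (f n r)"
    using f ms r unfolding smap_def by (metis act_subsset cells_subsset)
  then show ?thesis using d by (simp add: act_Ex)
qed

definition PLs :: "nat \<Rightarrow> nat \<Rightarrow> nat set set set" where
  "PLs n k = {C. \<Union>C \<union> {k} \<noteq> {0..n}}"

lemma to_sd:
  assumes f: "smap (subsset (Delta n) (horn n k)) (Ex X W) f" and kn: "k \<le> n"
  shows "\<exists>F. mmap le (sdposet n) (Mg n) (PLs n k) X W F \<and>
     (\<forall>m s j d. s \<in> horn n k m \<longrightarrow> d \<in> cells (Cg m) j \<longrightarrow> f m s j d = F j (push s j d))"
proof -
  define good where "good S \<longleftrightarrow> S \<subseteq> {0..n} \<and> k \<in> S \<and> S \<noteq> {0..n}" for S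
  have good_sub: "good S1" if "good S2" "S1 \<subseteq> S2" "k \<in> S1" for S1 S2
    using that unfolding good_def by blast
  have rho_horn: "rho n S \<in> horn n k n" if "good S" for S
  proof -
    have "S \<noteq> {}" "S \<subseteq> {0..n}" "k \<in> S" "S \<noteq> {0..n}" using that unfolding good_def by auto
    then show ?thesis using rho_cells[of S n] rho_img[of S n] unfolding horn_def by (simp add: insert_absorb)
  qed
  have bridge: "f n (rho n S1) j c = f n (rho n S2) j c"
    if "good S1" "good S2" "S1 \<subseteq> S2" "c \<in> cells (Cg n) j" "\<forall>i\<le>j. c i \<subseteq> S1" for S1 S2 j c
  proof -
    have "f n (rho n S1) j c = f n (rho n S2) j (push (rho n S1) j c)"
    proof (rule principle[OF f rho_horn[OF that(1)] rho_horn[OF that(2)] _ that(4)])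
      show "\<forall>i\<le>n. rho n S2 (rho n S1 i) = rho n S1 i"
      proof (intro allI impI)
        fix i assume "i \<le> n"
        moreover have "S1 \<noteq> {}" "S1 \<subseteq> {0..n}" using that(1) unfolding good_def by auto
        ultimately have "rho n S1 i \<in> S1" using rho_img[of S1 n] by (metis atLeastAtMost_iff imageI le0)
        then show "rho n S2 (rho n S1 i) = rho n S1 i" using rho_fix[of S2 n] that(2,3) unfolding good_def by auto
      qed
    qed
    also have "push (rho n S1) j c = c"
    proof -
      have "rho n S1 ` (c i) = c i" if "i \<le> j" for i
      proof -
        have "\<forall>x\<in>c i. rho n S1 x = x" using rho_fix[of S1 n] \<open>good S1\<close> \<open>\<forall>i\<le>j. c i \<subseteq> S1\<close> that
          unfolding good_def by blast
        then show ?thesis by (simp add: image_def)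
      qed
      then show ?thesis using that(4) unfolding push_def cells_Cg by (auto simp: fun_eq_iff)
    qed
    finally show ?thesis .
  qed
  define Sc where "Sc j c = \<Union>(c ` {0..j}) \<union> {k}" for j :: nat and c :: "nat \<Rightarrow> nat set"
  define F where "F j c = f n (rho n (Sc j c)) j c" for j c
  have good_Sc: "good (Sc j c)" if "c \<in> sub le (sdposet n) (PLs n k) j" for j c
    using that kn unfolding good_def Sc_def sub_iff PLs_def cells_nerve sdposet_def by auto
  have c_Sc: "\<forall>i\<le>j. c i \<subseteq> Sc j c" for j c by (auto simp: Sc_def)
  have fcell: "f n (rho n S) \<in> cells (Ex X W) n" if "good S" for S
    using f rho_horn[OF that] unfolding smap_def by auto
  have fmm: "marked_map (Cg n) (Mg n) X W (f n (rho n S))" if "good S" for S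
    using fcell[OF that] by (simp add: cells_Ex)
  have subc: "c \<in> cells (Cg n) j" if "c \<in> sub le (sdposet n) (PLs n k) j" for c j
    using that by (simp add: sub_iff Cg_def)
  have Fm: "mmap le (sdposet n) (Mg n) (PLs n k) X W F"
    unfolding mmap_def marked_map_def smap_def
  proof (intro conjI allI impI ballI)
    fix j c assume "c \<in> cells (subsset (nerve (sdposet n) le) (sub le (sdposet n) (PLs n k))) j"
    then have c: "c \<in> sub le (sdposet n) (PLs n k) j" by simp
    show "F j c \<in> cells X j" using fmm[OF good_Sc[OF c]] subc[OF c] unfolding F_def marked_map_def smap_def by auto
  next
    fix \<theta> p j c assume th: "mono_map \<theta> p j" and "c \<in> cells (subsset (nerve (sdposet n) le) (sub le (sdposet n) (PLs n k))) j"
    then have c: "c \<in> sub le (sdposet n) (PLs n k) j" by simp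
    define c' where "c' = act (nerve (sdposet n) le) \<theta> p j c"
    have c'c: "c' \<in> cells (Cg n) p" using act_nerve_cells[OF th] subc[OF c] by (simp add: c'_def Cg_def)
    have img: "c' ` {0..p} \<subseteq> c ` {0..j}" using th unfolding c'_def act_nerve mono_map_def by auto
    then have SS: "Sc p c' \<subseteq> Sc j c" unfolding Sc_def by auto
    have gc': "good (Sc p c')" using good_sub[OF good_Sc[OF c] SS] by (simp add: Sc_def)
    have "F p c' = f n (rho n (Sc j c)) p c'"
      unfolding F_def by (rule bridge[OF gc' good_Sc[OF c] SS c'c c_Sc])
    also have "\<dots> = act X \<theta> p j (F j c)"
      using fmm[OF good_Sc[OF c]] th subc[OF c] unfolding F_def c'_def marked_map_def smap_def Cg_def by auto
    finally show "F p (act (subsset (nerve (sdposet n) le) (sub le (sdposet n) (PLs n k))) \<theta> p j c) = act X \<theta> p j (F j c)"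
      by (simp add: c'_def)
  next
    fix e assume e: "e \<in> Mg n \<inter> sub le (sdposet n) (PLs n k) 1"
    then show "F 1 e \<in> W" using fmm[OF good_Sc, of e 1] unfolding F_def marked_map_def by auto
  qed
  have rel: "f m s j d = F j (push s j d)" if s: "s \<in> horn n k m" and d: "d \<in> cells (Cg m) j" for m s j d
  proof -
    have sc: "s \<in> cells (Delta n) m" using s by (simp add: horn_def)
    define S2 where "S2 = s ` {0..m} \<union> {k}"
    have g2: "good S2" using s kn unfolding S2_def good_def horn_def cells_Delta by auto
    have "f m s j d = f n (rho n S2) j (push s j d)"
    proof (rule principle[OF f s rho_horn[OF g2] _ d])
      show "\<forall>i\<le>m. rho n S2 (s i) = s i" using rho_fix[of S2 n] g2 unfolding good_def S2_def by auto
    qed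
    moreover have pc: "push s j d \<in> cells (Cg n) j" using push_cells[OF Delta_mono_map[OF sc] d] .
    moreover have SS: "Sc j (push s j d) \<subseteq> S2"
    proof -
      have "push s j d i \<subseteq> s ` {0..m}" if "i \<le> j" for i
        using d that unfolding push_def cells_Cg by (simp add: image_mono)
      then show ?thesis unfolding Sc_def S2_def by fastforce
    qed
    moreover have gp: "good (Sc j (push s j d))" using good_sub[OF g2 SS] by (simp add: Sc_def)
    ultimately show ?thesis unfolding F_def using bridge[OF gp g2 SS pc c_Sc] by simp
  qed
  show ?thesis using Fm rel by blast
qed

end



definition ch :: "nat \<Rightarrow> nat set set \<Rightarrow> bool" where
  "ch n C \<longleftrightarrow> finite C \<and> C \<noteq> {} \<and> (\<forall>A\<in>C. A \<noteq> {} \<and> A \<subseteq> {0..n}) \<and> (\<forall>A\<in>C. \<forall>A'\<in>C. A \<subseteq> A' \<or> A' \<subseteq> A)"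
definition uu :: "nat \<Rightarrow> nat set set \<Rightarrow> nat set set" where "uu k C = {A\<in>C. k \<notin> A}"
definition bb :: "nat \<Rightarrow> nat set set \<Rightarrow> nat set" where "bb k C = \<Union>(uu k C) \<union> {k}"
definition newc :: "nat \<Rightarrow> nat \<Rightarrow> nat set set \<Rightarrow> bool" where
  "newc n k C \<longleftrightarrow> {0..n} \<in> C \<and> {0..n} - {k} \<notin> C \<and> uu k C \<noteq> {}"
definition MM :: "nat \<Rightarrow> nat" where "MM n = 2 ^ (n+1) + 1"
definition key :: "nat \<Rightarrow> nat \<Rightarrow> nat set set \<Rightarrow> nat" where
  "key n k C = card (uu k C) * MM n + card (C - {bb k C})"
definition D1s :: "nat \<Rightarrow> nat \<Rightarrow> nat set set set" where
  "D1s n k = {C. \<Union>C \<union> {k} \<noteq> {0..n}} \<union> {C. C \<subseteq> Lposet n k}"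
definition D2 :: "nat \<Rightarrow> nat \<Rightarrow> nat \<Rightarrow> nat set set set \<Rightarrow> nat set set set" where
  "D2 n k w S = D1s n k \<union> {C. newc n k C \<and> key n k C < w} \<union> {C. \<exists>\<sigma>\<in>S. C \<subseteq> \<sigma>}"
definition Sig :: "nat \<Rightarrow> nat \<Rightarrow> nat \<Rightarrow> nat set set set" where
  "Sig n k w = {\<sigma>. ch n \<sigma> \<and> newc n k \<sigma> \<and> bb k \<sigma> \<in> \<sigma> \<and> key n k \<sigma> = w}"

lemma ch_sub: "ch n C \<Longrightarrow> C' \<subseteq> C \<Longrightarrow> C' \<noteq> {} \<Longrightarrow> ch n C'"
  unfolding ch_def by (meson finite_subset subsetD)

lemma chain_union_mem:
  assumes "finite C" "C \<noteq> {}" "\<forall>A\<in>C. \<forall>A'\<in>C. A \<subseteq> A' \<or> A' \<subseteq> A"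
  shows "\<Union>C \<in> C"
  using assms
proof (induction C rule: finite_ne_induct)
  case (singleton x) then show ?case by simp
next
  case (insert x F)
  then have u: "\<Union>F \<in> F" by auto
  then have "x \<subseteq> \<Union>F \<or> \<Union>F \<subseteq> x" using insert.prems by auto
  then show ?case using u by (auto simp: sup.absorb1 sup.absorb2)
qed

lemma ch_union: "ch n C \<Longrightarrow> \<Union>C \<in> C"
  unfolding ch_def using chain_union_mem by blast

lemma ch_union_sub: "ch n C \<Longrightarrow> \<Union>C \<subseteq> {0..n}"
  unfolding ch_def by auto

lemma ch_finite: "ch n C \<Longrightarrow> finite C" by (simp add: ch_def)

lemma ch_card: assumes "ch n C" shows "card C < MM n"
proof -
  have "C \<subseteq> Pow {0..n}" using assms unfolding ch_def by auto
  then have "card C \<le> card (Pow {0..n})" by (intro card_mono) auto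
  also have "\<dots> = 2 ^ (n+1)" by (simp add: card_Pow)
  finally show ?thesis by (simp add: MM_def)
qed

lemma uu_ch: "ch n C \<Longrightarrow> uu k C \<noteq> {} \<Longrightarrow> ch n (uu k C)"
  unfolding uu_def by (rule ch_sub) auto

lemma uu_max: "ch n C \<Longrightarrow> uu k C \<noteq> {} \<Longrightarrow> \<Union>(uu k C) \<in> uu k C"
  using ch_union uu_ch by blast

lemma union_eq_cases:
  assumes "U \<subseteq> {0..n}" "U \<union> {k} = {0..n}"
  shows "U = {0..n} \<or> U = {0..n} - {k}"
  using assms by blast

lemma notPL_T:
  assumes "ch n C" "\<Union>C \<union> {k} = {0..n}" "{0..n} - {k} \<notin> C"
  shows "{0..n} \<in> C"
  using union_eq_cases[OF ch_union_sub[OF assms(1)] assms(2)] ch_union[OF assms(1)] assms(3) by auto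

lemma newc_of:
  assumes "ch n C" "C \<notin> D1s n k" "{0..n} - {k} \<notin> C"
  shows "newc n k C"
proof -
  have "\<Union>C \<union> {k} = {0..n}" "\<not> C \<subseteq> Lposet n k" using assms(2) by (auto simp: D1s_def)
  then have "{0..n} \<in> C" using notPL_T assms by blast
  moreover have "uu k C \<noteq> {}"
  proof
    assume "uu k C = {}"
    then have "\<forall>A\<in>C. k \<in> A" by (auto simp: uu_def)
    then have "C \<subseteq> Lposet n k" using assms(1) unfolding ch_def Lposet_def by auto
    then show False using \<open>\<not> C \<subseteq> Lposet n k\<close> by simp
  qed
  ultimately show ?thesis using assms(3) by (simp add: newc_def)
qed

lemma bb_props:
  assumes "ch n C" "uu k C \<noteq> {}" "k \<le> n" "{0..n} - {k} \<notin> C"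
  shows "bb k C \<noteq> {0..n}" "bb k C \<notin> uu k C" "\<forall>A\<in>uu k C. A \<subseteq> bb k C \<and> A \<noteq> bb k C"
    "\<forall>A\<in>C. k \<in> A \<longrightarrow> bb k C \<subseteq> A" "bb k C \<noteq> {}" "bb k C \<subseteq> {0..n}" "k \<in> bb k C"
    "\<forall>A\<in>C. A \<subseteq> bb k C \<or> bb k C \<subseteq> A"
proof -
  have m: "\<Union>(uu k C) \<in> uu k C" by (rule uu_max[OF assms(1,2)])
  then have mC: "\<Union>(uu k C) \<in> C" "k \<notin> \<Union>(uu k C)" by (auto simp: uu_def)
  have msub: "\<Union>(uu k C) \<subseteq> {0..n}" using mC assms(1) unfolding ch_def by auto
  show "bb k C \<noteq> {0..n}"
  proof
    assume "bb k C = {0..n}"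
    then have "\<Union>(uu k C) = {0..n} - {k}" using mC(2) unfolding bb_def by blast
    then show False using mC(1) assms(4) by simp
  qed
  show "bb k C \<notin> uu k C" by (auto simp: bb_def uu_def)
  show "\<forall>A\<in>uu k C. A \<subseteq> bb k C \<and> A \<noteq> bb k C" by (auto simp: bb_def uu_def)
  show b4: "\<forall>A\<in>C. k \<in> A \<longrightarrow> bb k C \<subseteq> A"
  proof (intro ballI impI)
    fix A assume A: "A \<in> C" "k \<in> A"
    then have "A \<subseteq> \<Union>(uu k C) \<or> \<Union>(uu k C) \<subseteq> A" using mC(1) assms(1) unfolding ch_def by blast
    then have "\<Union>(uu k C) \<subseteq> A" using A(2) mC(2) by blast
    then show "bb k C \<subseteq> A" using A(2) by (simp add: bb_def)
  qed
  show "bb k C \<noteq> {}" by (simp add: bb_def)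
  show "bb k C \<subseteq> {0..n}" using msub assms(3) by (auto simp: bb_def)
  show "k \<in> bb k C" by (simp add: bb_def)
  show "\<forall>A\<in>C. A \<subseteq> bb k C \<or> bb k C \<subseteq> A"
    using b4 by (auto simp: bb_def uu_def)
qed

lemma key_mono:
  assumes "ch n C" "C' \<subseteq> C" "C' \<noteq> {}"
  shows "key n k C' \<le> key n k C"
    and "uu k C' \<noteq> uu k C \<Longrightarrow> key n k C' < key n k C"
    and "uu k C' = uu k C \<Longrightarrow> C' - {bb k C} \<noteq> C - {bb k C} \<Longrightarrow> key n k C' < key n k C"
proof -
  have fin: "finite C" using assms(1) ch_finite by blast
  have ch': "ch n C'" using ch_sub assms by blast
  have u: "uu k C' \<subseteq> uu k C" using assms(2) by (auto simp: uu_def)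
  have finu: "finite (uu k C)" using fin by (simp add: uu_def)
  have c1: "card (C' - {bb k C'}) < MM n" using ch_card[OF ch'] card_mono[of C' "C' - {bb k C'}"] ch_finite[OF ch']
    by (meson Diff_subset le_less_trans)
  have lt: "key n k C' < key n k C" if "uu k C' \<noteq> uu k C"
  proof -
    have "card (uu k C') < card (uu k C)" using u that finu by (meson psubsetI psubset_card_mono)
    then have "card (uu k C') + 1 \<le> card (uu k C)" by simp
    then have "(card (uu k C') + 1) * MM n \<le> card (uu k C) * MM n" by (rule mult_right_mono) simp
    then show ?thesis using c1 unfolding key_def by (simp add: algebra_simps)
  qed
  show "key n k C' < key n k C" if "uu k C' \<noteq> uu k C" using lt that .
  have eq: "key n k C' \<le> key n k C" "C' - {bb k C} \<noteq> C - {bb k C} \<Longrightarrow> key n k C' < key n k C"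
    if "uu k C' = uu k C"
  proof -
    have b: "bb k C' = bb k C" using that by (simp add: bb_def)
    have s: "C' - {bb k C} \<subseteq> C - {bb k C}" using assms(2) by auto
    have f2: "finite (C - {bb k C})" using fin by simp
    show "key n k C' \<le> key n k C" unfolding key_def b that using card_mono[OF f2 s] by simp
    assume "C' - {bb k C} \<noteq> C - {bb k C}"
    then have "card (C' - {bb k C}) < card (C - {bb k C})" using s f2 by (meson psubsetI psubset_card_mono)
    then show "key n k C' < key n k C" unfolding key_def b that by simp
  qed
  show "key n k C' \<le> key n k C" using lt eq by (cases "uu k C' = uu k C") auto
  show "uu k C' = uu k C \<Longrightarrow> C' - {bb k C} \<noteq> C - {bb k C} \<Longrightarrow> key n k C' < key n k C" using eq by blast
qed

lemma PL_noB:
  assumes "ch n C" "\<Union>C \<union> {k} \<noteq> {0..n}" "k \<le> n"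
  shows "{0..n} - {k} \<notin> C"
proof
  assume "{0..n} - {k} \<in> C"
  then have "{0..n} - {k} \<subseteq> \<Union>C" by auto
  then have "\<Union>C \<union> {k} = {0..n}" using ch_union_sub[OF assms(1)] assms(3) by auto
  then show False using assms(2) by simp
qed

lemma D2_noB:
  assumes "ch n C" "C \<in> D2 n k w S" "S \<subseteq> Sig n k w'" "k \<le> n"
  shows "{0..n} - {k} \<notin> C"
proof -
  consider (a) "\<Union>C \<union> {k} \<noteq> {0..n}" | (b) "C \<subseteq> Lposet n k" | (c) "newc n k C" | (d) \<sigma> where "\<sigma> \<in> S" "C \<subseteq> \<sigma>"
    using assms(2) unfolding D2_def D1s_def by blast
  then show ?thesis
  proof cases
    case a then show ?thesis using PL_noB assms by blast
  next
    case b then show ?thesis by (auto simp: Lposet_def)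
  next
    case c then show ?thesis by (simp add: newc_def)
  next
    case d then show ?thesis using assms(3) by (auto simp: Sig_def newc_def)
  qed
qed

lemma D2_closed:
  assumes "ch n C" "C \<in> D2 n k w S" "C' \<subseteq> C" "C' \<noteq> {}" "S \<subseteq> Sig n k w'" "k \<le> n"
  shows "C' \<in> D2 n k w S"
proof -
  have ch': "ch n C'" using ch_sub assms by blast
  have nB: "{0..n} - {k} \<notin> C'" using D2_noB[OF assms(1,2,5,6)] assms(3) by blast
  consider (a) "\<Union>C \<union> {k} \<noteq> {0..n}" | (b) "C \<subseteq> Lposet n k" | (c) "newc n k C \<and> key n k C < w" | (d) \<sigma> where "\<sigma> \<in> S" "C \<subseteq> \<sigma>"
    using assms(2) unfolding D2_def D1s_def by blast
  then show ?thesis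
  proof cases
    case a
    have "\<Union>C' \<union> {k} \<subseteq> \<Union>C \<union> {k}" using assms(3) by auto
    moreover have "\<Union>C \<union> {k} \<subseteq> {0..n}" using ch_union_sub[OF assms(1)] assms(6) by auto
    ultimately have "\<Union>C' \<union> {k} \<noteq> {0..n}" using a by blast
    then show ?thesis by (simp add: D2_def D1s_def)
  next
    case b then show ?thesis using assms(3) by (auto simp: D2_def D1s_def)
  next
    case c
    show ?thesis
    proof (cases "C' \<in> D1s n k")
      case True then show ?thesis by (simp add: D2_def)
    next
      case False
      then have "newc n k C'" using newc_of[OF ch' False nB] by simp
      moreover have "key n k C' < w" using key_mono(1)[OF assms(1,3,4), of k] c by simp
      ultimately show ?thesis by (simp add: D2_def)
    qed
  next
    case d then have "\<exists>\<sigma>\<in>S. C' \<subseteq> \<sigma>" using assms(3) by blast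
    then show ?thesis unfolding D2_def by blast
  qed
qed

lemma Sig_pattern:
  assumes sig: "\<sigma> \<in> Sig n k w" and nS: "\<sigma> \<notin> S" and S: "S \<subseteq> Sig n k w" and J: "J \<subseteq> \<sigma>" "J \<noteq> {}" and kn: "k \<le> n"
  shows "J \<in> D2 n k w S \<longleftrightarrow> \<not> (\<sigma> - {bb k \<sigma>} \<subseteq> J)"
proof -
  have chs: "ch n \<sigma>" and nc: "newc n k \<sigma>" and bin: "bb k \<sigma> \<in> \<sigma>" and kw: "key n k \<sigma> = w"
    using sig by (auto simp: Sig_def)
  have chJ: "ch n J" using ch_sub chs J by blast
  have nBs: "{0..n} - {k} \<notin> \<sigma>" and Ts: "{0..n} \<in> \<sigma>" and us: "uu k \<sigma> \<noteq> {}" using nc by (auto simp: newc_def)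
  note bp = bb_props[OF chs us kn nBs]
  show ?thesis
  proof
    assume JD: "J \<in> D2 n k w S"
    show "\<not> (\<sigma> - {bb k \<sigma>} \<subseteq> J)"
    proof
      assume sub: "\<sigma> - {bb k \<sigma>} \<subseteq> J"
      have TJ: "{0..n} \<in> J" using sub Ts bp(1) by auto
      have uJ: "uu k J = uu k \<sigma>" using sub J bp(2) by (auto simp: uu_def)
      have notPL: "\<Union>J \<union> {k} = {0..n}" using TJ ch_union_sub[OF chJ] kn by auto
      have notL: "\<not> J \<subseteq> Lposet n k" using uJ us by (auto simp: uu_def Lposet_def)
      have bJ: "bb k J = bb k \<sigma>" using uJ by (simp add: bb_def)
      have JJ: "J - {bb k \<sigma>} = \<sigma> - {bb k \<sigma>}" using sub J by auto
      have keyJ: "key n k J = w" using kw unfolding key_def uJ bJ JJ by simp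
      have "J \<notin> D1s n k" using notPL notL by (simp add: D1s_def)
      moreover have "\<not> (newc n k J \<and> key n k J < w)" using keyJ by simp
      ultimately have "\<exists>\<sigma>'\<in>S. J \<subseteq> \<sigma>'" using JD unfolding D2_def by blast
      then obtain \<sigma>' where s': "\<sigma>' \<in> S" "J \<subseteq> \<sigma>'" by blast
      have sig': "\<sigma>' \<in> Sig n k w" using s' S by auto
      then have chs': "ch n \<sigma>'" and kw': "key n k \<sigma>' = w" and bin': "bb k \<sigma>' \<in> \<sigma>'" by (auto simp: Sig_def)
      have u1: "uu k \<sigma> \<subseteq> uu k \<sigma>'" using uJ s'(2) by (auto simp: uu_def)
      have u2: "uu k \<sigma>' = uu k \<sigma>"
      proof (rule ccontr)
        assume ne: "uu k \<sigma>' \<noteq> uu k \<sigma>"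
        have "uu k \<sigma>' \<subseteq> \<sigma>'" by (auto simp: uu_def)
        then have "key n k (uu k \<sigma>') \<le> key n k \<sigma>'" using key_mono(1)[OF chs'] us u1 by blast
        have f': "finite (uu k \<sigma>')" using ch_finite[OF chs'] by (simp add: uu_def)
        have "card (uu k \<sigma>) < card (uu k \<sigma>')" using u1 ne f' by (metis psubsetI psubset_card_mono)
        then have "(card (uu k \<sigma>) + 1) * MM n \<le> card (uu k \<sigma>') * MM n" by (intro mult_right_mono) auto
        moreover have "card (\<sigma> - {bb k \<sigma>}) < MM n" using ch_card[OF chs] card_mono[of \<sigma> "\<sigma> - {bb k \<sigma>}"] ch_finite[OF chs]
          by (meson Diff_subset le_less_trans)
        ultimately have "key n k \<sigma> < key n k \<sigma>'" unfolding key_def by (simp add: algebra_simps)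
        then show False using kw kw' by simp
      qed
      have b': "bb k \<sigma>' = bb k \<sigma>" using u2 by (simp add: bb_def)
      have ss: "\<sigma> \<subseteq> \<sigma>'"
      proof
        fix x assume "x \<in> \<sigma>"
        show "x \<in> \<sigma>'"
        proof (cases "x = bb k \<sigma>")
          case True then show ?thesis using bin' b' by simp
        next
          case False then show ?thesis using sub s'(2) \<open>x \<in> \<sigma>\<close> by blast
        qed
      qed
      have "card (\<sigma>' - {bb k \<sigma>}) = card (\<sigma> - {bb k \<sigma>})" using kw kw' unfolding key_def u2 b' by simp
      moreover have "\<sigma> - {bb k \<sigma>} \<subseteq> \<sigma>' - {bb k \<sigma>}" using ss by blast
      moreover have "finite (\<sigma>' - {bb k \<sigma>})" using ch_finite[OF chs'] by simp
      ultimately have eqd: "\<sigma> - {bb k \<sigma>} = \<sigma>' - {bb k \<sigma>}"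
        using card_subset_eq[of "\<sigma>' - {bb k \<sigma>}" "\<sigma> - {bb k \<sigma>}"] by simp
      have "\<sigma>' = \<sigma>"
      proof
        show "\<sigma> \<subseteq> \<sigma>'" by (rule ss)
        show "\<sigma>' \<subseteq> \<sigma>"
        proof
          fix x assume "x \<in> \<sigma>'"
          show "x \<in> \<sigma>"
          proof (cases "x = bb k \<sigma>")
            case True then show ?thesis using bin by simp
          next
            case False then have "x \<in> \<sigma>' - {bb k \<sigma>}" using \<open>x \<in> \<sigma>'\<close> by simp
            then show ?thesis using eqd by blast
          qed
        qed
      qed
      then show False using s'(1) nS by simp
    qed
  next
    assume nsub: "\<not> (\<sigma> - {bb k \<sigma>} \<subseteq> J)"
    show "J \<in> D2 n k w S"
    proof (cases "J \<in> D1s n k")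
      case True then show ?thesis by (simp add: D2_def)
    next
      case False
      have nBJ: "{0..n} - {k} \<notin> J" using nBs J by auto
      have ncJ: "newc n k J" using newc_of[OF chJ False nBJ] .
      have "key n k J < key n k \<sigma>"
      proof (cases "uu k J = uu k \<sigma>")
        case True
        have "J - {bb k \<sigma>} \<noteq> \<sigma> - {bb k \<sigma>}" using nsub by blast
        then show ?thesis using key_mono(3)[OF chs J True] by simp
      next
        case False then show ?thesis using key_mono(2)[OF chs J] by simp
      qed
      then show ?thesis using ncJ kw by (simp add: D2_def)
    qed
  qed
qed

lemma D2_cover:
  assumes "ch n C" "C \<in> D2 n k (Suc w) {}" "k \<le> n"
  shows "C \<in> D2 n k w (Sig n k w)"
proof -
  consider (a) "C \<in> D1s n k" | (b) "newc n k C" "key n k C < w" | (c) "newc n k C" "key n k C = w"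
    using assms(2) unfolding D2_def by force
  then show ?thesis
  proof cases
    case a then show ?thesis by (simp add: D2_def)
  next
    case b then show ?thesis by (simp add: D2_def)
  next
    case c
    have nBs: "{0..n} - {k} \<notin> C" and us: "uu k C \<noteq> {}" and TC: "{0..n} \<in> C" using c by (auto simp: newc_def)
    note bp = bb_props[OF assms(1) us assms(3) nBs]
    define \<sigma> where "\<sigma> = insert (bb k C) C"
    have chs: "ch n \<sigma>" using assms(1) bp unfolding ch_def \<sigma>_def by auto
    have uus: "uu k \<sigma> = uu k C" using bp(7) by (auto simp: \<sigma>_def uu_def)
    have bbs: "bb k \<sigma> = bb k C" using uus by (simp add: bb_def)
    have ncs: "newc n k \<sigma>" using c uus bp(7) unfolding newc_def \<sigma>_def by auto
    have "\<sigma> - {bb k \<sigma>} = C - {bb k C}" using bbs by (auto simp: \<sigma>_def)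
    then have "key n k \<sigma> = w" using c(2) unfolding key_def uus bbs by simp
    then have "\<sigma> \<in> Sig n k w" using chs ncs bbs by (simp add: Sig_def \<sigma>_def)
    then show ?thesis by (auto simp: D2_def \<sigma>_def)
  qed
qed

lemma D2_final:
  assumes "ch n C" "{0..n} - {k} \<notin> C" "k \<le> n"
  shows "C \<in> D2 n k (MM n * MM n) {}"
proof (cases "C \<in> D1s n k")
  case True then show ?thesis by (simp add: D2_def)
next
  case False
  have nc: "newc n k C" using newc_of[OF assms(1) False assms(2)] .
  have "uu k C \<subseteq> C" by (auto simp: uu_def)
  then have "card (uu k C) \<le> card C" using ch_finite[OF assms(1)] card_mono by blast
  then have "card (uu k C) + 1 \<le> MM n" using ch_card[OF assms(1)] by simp
  then have "(card (uu k C) + 1) * MM n \<le> MM n * MM n" by (intro mult_right_mono) auto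
  moreover have "card (C - {bb k C}) < MM n" using ch_card[OF assms(1)] card_mono[of C "C - {bb k C}"] ch_finite[OF assms(1)]
    by (meson Diff_subset le_less_trans)
  ultimately have "key n k C < MM n * MM n" unfolding key_def by (simp add: algebra_simps)
  then show ?thesis using nc by (simp add: D2_def)
qed

lemma D2_zero: "D2 n k 0 {} = D1s n k"
  by (auto simp: D2_def)

lemma Sig_finite: "finite (Sig n k w)"
proof -
  have "Sig n k w \<subseteq> Pow (Pow {0..n})" by (auto simp: Sig_def ch_def)
  then show ?thesis by (rule finite_subset) simp
qed



lemma enum_chain:
  fixes \<sigma> :: "'a set" and R :: "'a \<Rightarrow> 'a \<Rightarrow> bool"
  assumes fin: "finite \<sigma>" and ne: "\<sigma> \<noteq> {}" and rf: "\<forall>x\<in>\<sigma>. R x x"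
    and an: "\<forall>x\<in>\<sigma>. \<forall>y\<in>\<sigma>. R x y \<longrightarrow> R y x \<longrightarrow> x = y"
    and tr: "\<forall>x\<in>\<sigma>. \<forall>y\<in>\<sigma>. \<forall>z\<in>\<sigma>. R x y \<longrightarrow> R y z \<longrightarrow> R x z"
    and tot: "\<forall>x\<in>\<sigma>. \<forall>y\<in>\<sigma>. R x y \<or> R y x"
  shows "\<exists>e. bij_betw e {0..card \<sigma> - 1} \<sigma> \<and> (\<forall>i\<le>card \<sigma> - 1. \<forall>j\<le>card \<sigma> - 1. R (e i) (e j) \<longleftrightarrow> i \<le> j)"
proof -
  define rk where "rk x = card {y\<in>\<sigma>. R y x \<and> y \<noteq> x}" for x
  have le1: "rk x \<le> rk y" if "x \<in> \<sigma>" "y \<in> \<sigma>" "R x y" for x y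
  proof -
    have "{z\<in>\<sigma>. R z x \<and> z \<noteq> x} \<subseteq> {z\<in>\<sigma>. R z y \<and> z \<noteq> y}"
    proof
      fix z assume z: "z \<in> {z\<in>\<sigma>. R z x \<and> z \<noteq> x}"
      then have "R z y" using tr that by blast
      moreover have "z \<noteq> y"
      proof
        assume "z = y" then have "R y x" using z by simp
        then show False using an that z \<open>z = y\<close> by blast
      qed
      ultimately show "z \<in> {z\<in>\<sigma>. R z y \<and> z \<noteq> y}" using z by simp
    qed
    then show ?thesis unfolding rk_def by (intro card_mono) (use fin in auto)
  qed
  have lt1: "rk y < rk x" if "x \<in> \<sigma>" "y \<in> \<sigma>" "\<not> R x y" for x y
  proof -
    have Ryx: "R y x" using tot that by blast
    have yx: "y \<noteq> x" using that rf by blast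
    have "{z\<in>\<sigma>. R z y \<and> z \<noteq> y} \<subset> {z\<in>\<sigma>. R z x \<and> z \<noteq> x}"
    proof
      show "{z\<in>\<sigma>. R z y \<and> z \<noteq> y} \<subseteq> {z\<in>\<sigma>. R z x \<and> z \<noteq> x}"
      proof
        fix z assume z: "z \<in> {z\<in>\<sigma>. R z y \<and> z \<noteq> y}"
        then have "R z x" using tr that Ryx by blast
        moreover have "z \<noteq> x" using z that by blast
        ultimately show "z \<in> {z\<in>\<sigma>. R z x \<and> z \<noteq> x}" using z by simp
      qed
      show "{z\<in>\<sigma>. R z y \<and> z \<noteq> y} \<noteq> {z\<in>\<sigma>. R z x \<and> z \<noteq> x}"
        using Ryx yx that(2) by blast
    qed
    then show ?thesis unfolding rk_def by (intro psubset_card_mono) (use fin in auto)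
  qed
  have iff: "R x y \<longleftrightarrow> rk x \<le> rk y" if "x \<in> \<sigma>" "y \<in> \<sigma>" for x y
    using le1 lt1 that by fastforce
  have inj: "inj_on rk \<sigma>"
  proof (rule inj_onI)
    fix x y assume "x \<in> \<sigma>" "y \<in> \<sigma>" "rk x = rk y"
    then show "x = y" using iff an by (metis order_refl)
  qed
  have rng: "rk ` \<sigma> \<subseteq> {0..card \<sigma> - 1}"
  proof
    fix r assume "r \<in> rk ` \<sigma>"
    then obtain x where x: "x \<in> \<sigma>" "r = rk x" by auto
    have "{y\<in>\<sigma>. R y x \<and> y \<noteq> x} \<subseteq> \<sigma> - {x}" by auto
    then have "rk x \<le> card (\<sigma> - {x})" unfolding rk_def by (intro card_mono) (use fin in auto)
    then show "r \<in> {0..card \<sigma> - 1}" using x fin by auto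
  qed
  have cpos: "card \<sigma> > 0" using ne fin by (simp add: card_gt_0_iff)
  have "card (rk ` \<sigma>) = card {0..card \<sigma> - 1}" using card_image[OF inj] cpos by simp
  then have im: "rk ` \<sigma> = {0..card \<sigma> - 1}" using rng by (intro card_subset_eq) auto
  have bij: "bij_betw rk \<sigma> {0..card \<sigma> - 1}" using inj im by (simp add: bij_betw_def)
  define e where "e = inv_into \<sigma> rk"
  have be: "bij_betw e {0..card \<sigma> - 1} \<sigma>" using bij_betw_inv_into[OF bij] by (simp add: e_def)
  have ei: "e i \<in> \<sigma>" "rk (e i) = i" if "i \<le> card \<sigma> - 1" for i
    using that im by (auto simp: e_def intro: inv_into_into f_inv_into_f)
  show ?thesis
    by (rule exI[of _ e]) (use be ei iff in auto)
qed

lemma wc_mrlp: "weakly_closed X W \<Longrightarrow> mrlp (Delta 2) (cells (Delta 2) 1) (horn 2 1) X W"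
  unfolding weakly_closed_def mrlp_def marked_map_def
proof (intro allI impI)
  fix f assume wc: "\<forall>f. smap (subsset (Delta 2) (horn 2 1)) X f \<longrightarrow> (\<forall>e\<in>horn 2 1 1. f 1 e \<in> W) \<longrightarrow>
        (\<exists>g. smap (Delta 2) X g \<and> (\<forall>n. \<forall>a\<in>horn 2 1 n. g n a = f n a) \<and> (\<forall>e\<in>cells (Delta 2) 1. g 1 e \<in> W))"
    and f: "smap (subsset (Delta 2) (horn 2 1)) X f \<and> (\<forall>e\<in>cells (Delta 2) 1 \<inter> horn 2 1 1. f 1 e \<in> W)"
  have "horn 2 1 1 \<subseteq> cells (Delta 2) 1" by (auto simp: horn_def)
  then have "\<forall>e\<in>horn 2 1 1. f 1 e \<in> W" using f by blast
  then show "\<exists>g. (smap (Delta 2) X g \<and> (\<forall>e\<in>cells (Delta 2) 1. g 1 e \<in> W)) \<and> (\<forall>n. \<forall>a\<in>horn 2 1 n. g n a = f n a)"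
    using wc f by blast
qed

lemma horn_edge:
  assumes "s \<in> cells (Delta N) 1" "s \<notin> horn N i 1" "0 < i" "i < N"
  shows "N = 2 \<and> i = 1 \<and> s 0 = 0 \<and> s 1 = 2"
proof -
  have ins: "insert i (s ` {0..1}) = {0..N}" using assms(1,2) by (auto simp: horn_def)
  have "{0..1::nat} = {0, 1}" by auto
  then have "s ` {0..1} = {s 0, s 1}" by simp
  then have ins2: "{i, s 0, s 1} = {0..N}" using ins by simp
  have "N \<le> 2"
  proof (rule ccontr)
    assume "\<not> N \<le> 2"
    then have "0 \<in> {i, s 0, s 1}" "1 \<in> {i, s 0, s 1}" "2 \<in> {i, s 0, s 1}" "3 \<in> {i, s 0, s 1}"
      using ins2 by auto
    then show False by auto
  qed
  then have N2: "N = 2" using assms(3,4) by simp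
  then have i1: "i = 1" using assms(3,4) by simp
  have m: "s 0 \<le> s 1" using assms(1) by (auto simp: cells_Delta)
  have "0 \<in> {i, s 0, s 1}" "2 \<in> {i, s 0, s 1}" using ins2 N2 by auto
  then show ?thesis using N2 i1 m by auto
qed

context ordset
begin

lemma img_ch: assumes "c \<in> cells (Cg n) m" shows "ch n (c ` {0..m})"
proof -
  have a: "\<forall>A\<in>c ` {0..m}. A \<noteq> {} \<and> A \<subseteq> {0..n}" using assms unfolding cells_Cg by auto
  have b: "\<forall>A\<in>c ` {0..m}. \<forall>A'\<in>c ` {0..m}. A \<subseteq> A' \<or> A' \<subseteq> A"
  proof (intro ballI)
    fix A A' assume "A \<in> c ` {0..m}" "A' \<in> c ` {0..m}"
    then obtain i j where "i \<le> m" "j \<le> m" "A = c i" "A' = c j" by auto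
    then show "A \<subseteq> A' \<or> A' \<subseteq> A" using assms le_comp unfolding cells_Cg by (metis nle_le)
  qed
  show ?thesis unfolding ch_def using a b by simp
qed

lemma horn_attach:
  assumes G: "mmap le (sdposet n) (Mg n) D X W G"
  and Dcl: "\<forall>m c \<theta> p. c \<in> cells (nerve (sdposet n) le) m \<longrightarrow> c ` {0..m} \<in> D \<longrightarrow> mono_map \<theta> p m \<longrightarrow> (act (nerve (sdposet n) le) \<theta> p m c) ` {0..p} \<in> D"
  and chs: "ch n \<sigma>" and b: "b \<in> \<sigma>"
  and pat: "\<forall>J. J \<subseteq> \<sigma> \<longrightarrow> J \<noteq> {} \<longrightarrow> (J \<in> D \<longleftrightarrow> \<not> (\<sigma> - {b} \<subseteq> J))"
  and below: "\<exists>x\<in>\<sigma>. le x b \<and> x \<noteq> b" and above: "\<exists>y\<in>\<sigma>. le b y \<and> y \<noteq> b"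
  and mk3: "card \<sigma> = 3 \<Longrightarrow> \<forall>x\<in>\<sigma>. \<forall>y\<in>\<sigma>. x \<noteq> b \<longrightarrow> y \<noteq> b \<longrightarrow> x \<noteq> y \<longrightarrow> mu x = mu y \<longrightarrow> (\<forall>z\<in>\<sigma>. mu z = mu x)"
  and qc: "\<forall>N i. 0 < i \<longrightarrow> i < N \<longrightarrow> rlp (Delta N) (horn N i) X"
  and wc: "weakly_closed X W"
  shows "\<exists>G'. mmap le (sdposet n) (Mg n) (D \<union> {C. C \<subseteq> \<sigma>}) X W G' \<and> (\<forall>m. \<forall>c\<in>sub le (sdposet n) D m. G' m c = G m c)"
proof -
  have fin: "finite \<sigma>" and ne: "\<sigma> \<noteq> {}" using chs by (auto simp: ch_def)
  have tot: "\<forall>x\<in>\<sigma>. \<forall>y\<in>\<sigma>. le x y \<or> le y x" using chs le_cases unfolding ch_def by auto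
  obtain e where bij: "bij_betw e {0..card \<sigma> - 1} \<sigma>"
    and ord: "\<forall>i\<le>card \<sigma> - 1. \<forall>j\<le>card \<sigma> - 1. le (e i) (e j) \<longleftrightarrow> i \<le> j"
    using enum_chain[OF fin ne, of le] le_refl le_antisym le_trans tot by blast
  define N where "N = card \<sigma> - 1"
  have eim: "e ` {0..N} = \<sigma>" using bij by (simp add: bij_betw_def N_def)
  have einj: "inj_on e {0..N}" using bij by (simp add: bij_betw_def N_def)
  have ord': "\<forall>a\<in>{0..N}. \<forall>b\<in>{0..N}. le (e a) (e b) \<longleftrightarrow> a \<le> b" using ord by (simp add: N_def)
  obtain i0 where i0: "i0 \<le> N" "e i0 = b" using b eim by force
  have idx: "\<exists>j\<le>N. e j = x" if "x \<in> \<sigma>" for x using that eim by force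
  have ipos: "0 < i0"
  proof -
    obtain x where "x \<in> \<sigma>" "le x b" "x \<noteq> b" using below by blast
    then obtain j where "j \<le> N" "e j = x" using idx by blast
    then have "j \<le> i0" "j \<noteq> i0" using ord' i0 \<open>le x b\<close> \<open>x \<noteq> b\<close> by auto
    then show ?thesis by simp
  qed
  have ilt: "i0 < N"
  proof -
    obtain y where "y \<in> \<sigma>" "le b y" "y \<noteq> b" using above by blast
    then obtain j where "j \<le> N" "e j = y" using idx by blast
    then have "i0 \<le> j" "j \<noteq> i0" using ord' i0 \<open>le b y\<close> \<open>y \<noteq> b\<close> by auto
    then show ?thesis using \<open>j \<le> N\<close> by simp
  qed
  have Dn: "nerve {0..N} (\<le>) = Delta N" by (simp add: Delta_def)
  define VK where "VK = {s \<in> cells (Delta N) 1. (\<lambda>i. if i \<le> 1 then e (s i) else undefined) \<in> Mg n}"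
  have e_in: "e ` {0..N} \<subseteq> sdposet n" using eim chs unfolding ch_def sdposet_def by auto
  have patK: "\<forall>m s. s \<in> cells (nerve {0..N} (\<le>)) m \<longrightarrow> (e ` s ` {0..m} \<in> D \<longleftrightarrow> s \<in> horn N i0 m)"
  proof (intro allI impI)
    fix m s assume "s \<in> cells (nerve {0..N} (\<le>)) m"
    then have sc: "s \<in> cells (Delta N) m" using Dn by simp
    define I where "I = s ` {0..m}"
    have IN: "I \<subseteq> {0..N}" using sc unfolding cells_Delta I_def by auto
    have Ine: "I \<noteq> {}" by (simp add: I_def)
    have sub: "e ` I \<subseteq> \<sigma>" using IN eim by auto
    have eq: "(\<sigma> - {b} \<subseteq> e ` I) \<longleftrightarrow> insert i0 I = {0..N}"
    proof
      assume h: "\<sigma> - {b} \<subseteq> e ` I"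
      show "insert i0 I = {0..N}"
      proof
        show "insert i0 I \<subseteq> {0..N}" using IN i0 by auto
        show "{0..N} \<subseteq> insert i0 I"
        proof
          fix j assume j: "j \<in> {0..N}"
          show "j \<in> insert i0 I"
          proof (cases "j = i0")
            case False
            have "e j \<noteq> b"
            proof
              assume "e j = b"
              then have "e j = e i0" using i0 by simp
              then have "j = i0" using inj_onD[OF einj, of j i0] i0(1) j by simp
              then show False using False by simp
            qed
            moreover have "e j \<in> \<sigma>" using j eim by auto
            ultimately have "e j \<in> e ` I" using h by blast
            then obtain j' where "j' \<in> I" "e j = e j'" by auto
            moreover have "j' \<in> {0..N}" using \<open>j' \<in> I\<close> IN by blast
            ultimately have "j = j'" using inj_onD[OF einj, of j j'] j by simp
            then show ?thesis using \<open>j' \<in> I\<close> by simp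
          qed simp
        qed
      qed
    next
      assume h: "insert i0 I = {0..N}"
      show "\<sigma> - {b} \<subseteq> e ` I"
      proof
        fix x assume x: "x \<in> \<sigma> - {b}"
        then obtain j where "j \<le> N" "e j = x" using idx by blast
        then have "j \<noteq> i0" using x i0 by auto
        have "j \<in> {0..N}" using \<open>j \<le> N\<close> by simp
        then have "j \<in> insert i0 I" using h by simp
        then have "j \<in> I" using \<open>j \<noteq> i0\<close> by simp
        then show "x \<in> e ` I" using \<open>e j = x\<close> by auto
      qed
    qed
    have "e ` I \<in> D \<longleftrightarrow> \<not> (\<sigma> - {b} \<subseteq> e ` I)" using pat sub Ine by simp
    moreover have "s \<in> horn N i0 m \<longleftrightarrow> insert i0 I \<noteq> {0..N}" using sc by (simp add: horn_def I_def)
    ultimately show "e ` s ` {0..m} \<in> D \<longleftrightarrow> s \<in> horn N i0 m"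
      using eq unfolding I_def by blast
  qed
  have DKc: "\<forall>m. horn N i0 m \<subseteq> cells (nerve {0..N} (\<le>)) m" using Dn by (auto simp: horn_def)
  have marks: "\<forall>s \<in> cells (nerve {0..N} (\<le>)) 1. s \<in> VK \<longleftrightarrow> (\<lambda>i. if i \<le> 1 then e (s i) else undefined) \<in> Mg n"
    using Dn by (simp add: VK_def)
  have lift: "mrlp (nerve {0..N} (\<le>)) VK (horn N i0) X W"
  proof (cases "\<exists>s\<in>VK. s \<notin> horn N i0 1")
    case False
    then have "VK \<subseteq> horn N i0 1" by blast
    moreover have "rlp (Delta N) (horn N i0) X" using qc ipos ilt by blast
    ultimately show ?thesis using rlp_mrlp Dn by metis
  next
    case True
    then obtain s where s: "s \<in> VK" "s \<notin> horn N i0 1" by blast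
    have sc: "s \<in> cells (Delta N) 1" using s by (simp add: VK_def)
    have hs: "N = 2" "i0 = 1" "s 0 = 0" "s 1 = 2" using horn_edge[OF sc s(2) ipos ilt] by auto
    have m02: "mu (e 0) = mu (e 2)" using s hs unfolding VK_def Mg_def by auto
    have e0: "e 0 \<in> \<sigma>" "e 2 \<in> \<sigma>" using eim hs by auto
    have inj3: "x = y" if "e x = e y" "x \<le> 2" "y \<le> 2" for x y
      using inj_onD[OF einj, of x y] that hs by simp
    have ne0: "e 0 \<noteq> b" "e 2 \<noteq> b" "e 0 \<noteq> e 2"
      using inj3[of 0 1] inj3[of 2 1] inj3[of 0 2] i0 hs by auto
    have "card \<sigma> = 3" using hs N_def fin ne by (simp add: card_gt_0_iff)
    then have allmu: "\<forall>z\<in>\<sigma>. mu z = mu (e 0)" using mk3 e0 ne0 m02 by blast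
    have VKall: "VK = cells (Delta 2) 1"
    proof
      show "VK \<subseteq> cells (Delta 2) 1" using hs by (auto simp: VK_def)
      show "cells (Delta 2) 1 \<subseteq> VK"
      proof
        fix t assume t: "t \<in> cells (Delta 2) 1"
        have tv: "t 0 \<le> 2" "t 1 \<le> 2" "t 0 \<le> t 1" using t unfolding cells_Delta by auto
        have et: "e (t 0) \<in> \<sigma>" "e (t 1) \<in> \<sigma>" using tv eim hs by auto
        have "(\<lambda>i. if i \<le> 1 then e (t i) else undefined) \<in> cells (Cg n) 1"
          unfolding cells_Cg using et chs ord' tv hs unfolding ch_def
          by (auto simp: le_refl le_Suc_eq)
        moreover have "mu (e (t 0)) = mu (e (t 1))" using allmu et by simp
        ultimately show "t \<in> VK" using t hs by (simp add: VK_def Mg_def)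
      qed
    qed
    show ?thesis using wc_mrlp[OF wc] VKall hs Dn by simp
  qed
  have Dcl': "\<forall>m c \<theta> p. c \<in> cells (nerve (sdposet n) le) m \<longrightarrow> c ` {0..m} \<in> D \<longrightarrow> mono_map \<theta> p m \<longrightarrow> (act (nerve (sdposet n) le) \<theta> p m c) ` {0..p} \<in> D"
    using Dcl .
  have "\<exists>G'. mmap le (sdposet n) (Mg n) (D \<union> {C. C \<subseteq> e ` {0..N}}) X W G' \<and> (\<forall>m. \<forall>c\<in>sub le (sdposet n) D m. G' m c = G m c)"
    by (rule attach[OF e_in ord' G Dcl' patK DKc marks lift])
  then show ?thesis using eim by simp
qed

end



lemma Max_int: "Max {0..(n::nat)} = n" by (rule Max_eqI) auto
lemma Min_int: "Min {0..(n::nat)} = 0" by (rule Min_eqI) auto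

lemma mu_ins_Max: assumes "finite A" "A \<noteq> {}" "k \<le> n" "Max A = n" shows "Max (A \<union> {k}) = n"
proof -
  have "Max (insert k A) = max k (Max A)" using Max_insert[OF assms(1,2)] .
  then show ?thesis using assms(3,4) by simp
qed

lemma mu_ins_Min: assumes "finite A" "A \<noteq> {}" "Min A = (0::nat)" shows "Min (A \<union> {k}) = 0"
proof -
  have "Min (insert k A) = min k (Min A)" using Min_insert[OF assms(1,2)] .
  then show ?thesis using assms(3) by simp
qed

context ordset
begin

definition Lg :: "nat \<Rightarrow> nat \<Rightarrow> (nat \<Rightarrow> nat set) sset" where "Lg n k = nerve (Lposet n k) le"
definition Lmk :: "nat \<Rightarrow> nat \<Rightarrow> (nat \<Rightarrow> nat set) set" where "Lmk n k = {s \<in> cells (Lg n k) 1. mu (s 0) = mu (s 1)}"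
definition LJg :: "nat \<Rightarrow> nat \<Rightarrow> nat \<Rightarrow> (nat \<Rightarrow> nat set) set" where
  "LJg n k m = {s \<in> cells (Lg n k) m. \<forall>i\<le>m. s i \<noteq> {0..n}}"

lemma PLs_eq: "PLs n k = {C. \<Union>C \<union> {k} \<noteq> {0..n}}" by (simp add: PLs_def)

lemma Lposet_sd: "Lposet n k \<subseteq> sdposet n" by (auto simp: Lposet_def sdposet_def)

lemma Lg_cells: "s \<in> cells (Lg n k) m \<Longrightarrow> s \<in> cells (Cg n) m"
  using Lposet_sd unfolding Lg_def Cg_def cells_nerve by blast

lemma act_img_sub: "mono_map \<theta> p m \<Longrightarrow> act (nerve P le) \<theta> p m c ` {0..p} \<subseteq> c ` {0..m}"
  by (auto simp: act_nerve mono_map_def)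

lemma PLs_closed:
  assumes "k \<le> n"
  shows "\<forall>m c \<theta> p. c \<in> cells (nerve (sdposet n) le) m \<longrightarrow> c ` {0..m} \<in> PLs n k \<longrightarrow> mono_map \<theta> p m \<longrightarrow> (act (nerve (sdposet n) le) \<theta> p m c) ` {0..p} \<in> PLs n k"
proof (intro allI impI)
  fix m c \<theta> p assume c: "c \<in> cells (nerve (sdposet n) le) m" and cP: "c ` {0..m} \<in> PLs n k" and th: "mono_map \<theta> p m"
  have ch: "ch n (c ` {0..m})" using img_ch c by (simp add: Cg_def)
  have "\<Union>(act (nerve (sdposet n) le) \<theta> p m c ` {0..p}) \<union> {k} \<subseteq> \<Union>(c ` {0..m}) \<union> {k}"
    using act_img_sub[OF th] by blast
  moreover have "\<Union>(c ` {0..m}) \<union> {k} \<subseteq> {0..n}" using ch_union_sub[OF ch] assms by auto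
  moreover have "\<Union>(c ` {0..m}) \<union> {k} \<noteq> {0..n}" using cP unfolding PLs_eq by simp
  ultimately have "\<Union>(act (nerve (sdposet n) le) \<theta> p m c ` {0..p}) \<union> {k} \<noteq> {0..n}" by blast
  then show "(act (nerve (sdposet n) le) \<theta> p m c) ` {0..p} \<in> PLs n k"
    unfolding PLs_eq by simp
qed

lemma stage1:
  assumes F: "mmap le (sdposet n) (Mg n) (PLs n k) X W F" and kn: "k \<le> n"
  and lift: "mrlp (Lg n k) (Lmk n k) (LJg n k) X W"
  shows "\<exists>G. mmap le (sdposet n) (Mg n) (D1s n k) X W G \<and> (\<forall>m. \<forall>c\<in>sub le (sdposet n) (PLs n k) m. G m c = F m c)"
proof -
  have e_in: "id ` Lposet n k \<subseteq> sdposet n" using Lposet_sd by simp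
  have e_ord: "\<forall>a\<in>Lposet n k. \<forall>b\<in>Lposet n k. le (id a) (id b) \<longleftrightarrow> le a b" by simp
  have pat: "\<forall>m s. s \<in> cells (nerve (Lposet n k) le) m \<longrightarrow> (id ` s ` {0..m} \<in> PLs n k \<longleftrightarrow> s \<in> LJg n k m)"
  proof (intro allI impI)
    fix m s assume s: "s \<in> cells (nerve (Lposet n k) le) m"
    then have sL: "s \<in> cells (Lg n k) m" by (simp add: Lg_def)
    have ch: "ch n (s ` {0..m})" using img_ch[OF Lg_cells[OF sL]] .
    have sk: "\<forall>i\<le>m. k \<in> s i" using s unfolding cells_nerve Lposet_def by auto
    show "id ` s ` {0..m} \<in> PLs n k \<longleftrightarrow> s \<in> LJg n k m"
    proof
      assume h: "id ` s ` {0..m} \<in> PLs n k"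
      have "\<forall>i\<le>m. s i \<noteq> {0..n}"
      proof (intro allI impI)
        fix i assume "i \<le> m"
        show "s i \<noteq> {0..n}"
        proof
          assume "s i = {0..n}"
          then have "{0..n} \<subseteq> \<Union>(s ` {0..m})" using \<open>i \<le> m\<close> by auto
          then have "\<Union>(s ` {0..m}) \<union> {k} = {0..n}" using ch_union_sub[OF ch] kn by auto
          then show False using h by (simp add: PLs_eq)
        qed
      qed
      then show "s \<in> LJg n k m" using sL by (simp add: LJg_def)
    next
      assume h: "s \<in> LJg n k m"
      obtain i where i: "i \<le> m" "\<Union>(s ` {0..m}) = s i" using ch_union[OF ch] by auto
      then have "\<Union>(s ` {0..m}) \<union> {k} = s i" using sk by auto
      then show "id ` s ` {0..m} \<in> PLs n k" using h i unfolding LJg_def PLs_eq by auto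
    qed
  qed
  have DKc: "\<forall>m. LJg n k m \<subseteq> cells (nerve (Lposet n k) le) m" by (auto simp: LJg_def Lg_def)
  have marks: "\<forall>s \<in> cells (nerve (Lposet n k) le) 1. s \<in> Lmk n k \<longleftrightarrow> (\<lambda>i. if i \<le> 1 then id (s i) else undefined) \<in> Mg n"
  proof
    fix s assume s: "s \<in> cells (nerve (Lposet n k) le) 1"
    then have "(\<lambda>i. if i \<le> 1 then id (s i) else undefined) = s" unfolding cells_nerve by (auto simp: fun_eq_iff)
    moreover have "s \<in> cells (Cg n) 1" using Lg_cells s by (simp add: Lg_def)
    ultimately show "s \<in> Lmk n k \<longleftrightarrow> (\<lambda>i. if i \<le> 1 then id (s i) else undefined) \<in> Mg n"
      using s by (simp add: Lmk_def Mg_def Lg_def)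
  qed
  have lift': "mrlp (nerve (Lposet n k) le) (Lmk n k) (LJg n k) X W" using lift by (simp add: Lg_def)
  have "\<exists>G'. mmap le (sdposet n) (Mg n) (PLs n k \<union> {C. C \<subseteq> id ` Lposet n k}) X W G' \<and> (\<forall>m. \<forall>c\<in>sub le (sdposet n) (PLs n k) m. G' m c = F m c)"
    by (rule attach[OF e_in e_ord F PLs_closed[OF kn] pat DKc marks lift'])
  moreover have "PLs n k \<union> {C. C \<subseteq> id ` Lposet n k} = D1s n k" by (simp add: D1s_def PLs_eq)
  ultimately show ?thesis by simp
qed

end



context ordset
begin

lemma Sig_facts:
  assumes sig: "\<sigma> \<in> Sig n k w" and kn: "k \<le> n"
  shows "\<exists>x\<in>\<sigma>. le x (bb k \<sigma>) \<and> x \<noteq> bb k \<sigma>" "\<exists>y\<in>\<sigma>. le (bb k \<sigma>) y \<and> y \<noteq> bb k \<sigma>"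
    "card \<sigma> = 3 \<Longrightarrow> \<forall>x\<in>\<sigma>. \<forall>y\<in>\<sigma>. x \<noteq> bb k \<sigma> \<longrightarrow> y \<noteq> bb k \<sigma> \<longrightarrow> x \<noteq> y \<longrightarrow> mu x = mu y \<longrightarrow> (\<forall>z\<in>\<sigma>. mu z = mu x)"
proof -
  have chs: "ch n \<sigma>" and nc: "newc n k \<sigma>" and bin: "bb k \<sigma> \<in> \<sigma>" using sig by (auto simp: Sig_def)
  have nBs: "{0..n} - {k} \<notin> \<sigma>" and Ts: "{0..n} \<in> \<sigma>" and us: "uu k \<sigma> \<noteq> {}" using nc by (auto simp: newc_def)
  note bp = bb_props[OF chs us kn nBs]
  obtain a where a: "a \<in> uu k \<sigma>" using us by blast
  have aS: "a \<in> \<sigma>" using a by (simp add: uu_def)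
  have ab: "a \<subseteq> bb k \<sigma>" "a \<noteq> bb k \<sigma>" using bp(3) a by auto
  have bT: "bb k \<sigma> \<subseteq> {0..n}" "bb k \<sigma> \<noteq> {0..n}" using bp by auto
  show "\<exists>x\<in>\<sigma>. le x (bb k \<sigma>) \<and> x \<noteq> bb k \<sigma>" using le_cases ab bT aS Ts by (metis (full_types))
  show "\<exists>y\<in>\<sigma>. le (bb k \<sigma>) y \<and> y \<noteq> bb k \<sigma>" using le_cases ab bT aS Ts by (metis (full_types))
  assume c3: "card \<sigma> = 3"
  have aT: "a \<noteq> {0..n}" using a kn by (auto simp: uu_def)
  have sub3: "{a, bb k \<sigma>, {0..n}} \<subseteq> \<sigma>" using aS bin Ts by auto
  have "card {a, bb k \<sigma>, {0..n}} = 3" using ab(2) aT bT(2) by simp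
  then have s3: "\<sigma> = {a, bb k \<sigma>, {0..n}}" using sub3 c3 ch_finite[OF chs] by (metis card_subset_eq)
  have uua: "uu k \<sigma> = {a}"
  proof
    show "uu k \<sigma> \<subseteq> {a}"
    proof
      fix x assume x: "x \<in> uu k \<sigma>"
      then have "x \<in> \<sigma>" "x \<noteq> bb k \<sigma>" "x \<noteq> {0..n}" using bp(2) kn by (auto simp: uu_def)
      then show "x \<in> {a}" using s3 by blast
    qed
    show "{a} \<subseteq> uu k \<sigma>" using a by simp
  qed
  have bdef: "bb k \<sigma> = a \<union> {k}" using uua by (simp add: bb_def)
  have asub: "a \<subseteq> {0..n}" "a \<noteq> {}" using chs aS unfolding ch_def by auto
  have afin: "finite a" "a \<noteq> {}" using finite_subset[OF asub(1)] asub(2) by auto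
  have muab: "mu (bb k \<sigma>) = mu {0..n}" if "mu a = mu {0..n}"
    using le_cases that mu_ins_Max[OF afin kn] mu_ins_Min[OF afin] Max_int Min_int bdef by auto
  show "\<forall>x\<in>\<sigma>. \<forall>y\<in>\<sigma>. x \<noteq> bb k \<sigma> \<longrightarrow> y \<noteq> bb k \<sigma> \<longrightarrow> x \<noteq> y \<longrightarrow> mu x = mu y \<longrightarrow> (\<forall>z\<in>\<sigma>. mu z = mu x)"
  proof (intro ballI impI)
    fix x y z assume xy: "x \<in> \<sigma>" "y \<in> \<sigma>" "x \<noteq> bb k \<sigma>" "y \<noteq> bb k \<sigma>" "x \<noteq> y" "mu x = mu y" and z: "z \<in> \<sigma>"
    have "x \<in> {a, {0..n}}" "y \<in> {a, {0..n}}" using xy s3 by blast+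
    then have "mu a = mu {0..n}" using xy(5,6) by auto
    then show "mu z = mu x" using muab z s3 \<open>x \<in> {a, {0..n}}\<close> by auto
  qed
qed

lemma D2_Dcl:
  assumes "S \<subseteq> Sig n k w'" "k \<le> n"
  shows "\<forall>m c \<theta> p. c \<in> cells (nerve (sdposet n) le) m \<longrightarrow> c ` {0..m} \<in> D2 n k w S \<longrightarrow> mono_map \<theta> p m \<longrightarrow> (act (nerve (sdposet n) le) \<theta> p m c) ` {0..p} \<in> D2 n k w S"
proof (intro allI impI)
  fix m c \<theta> p assume c: "c \<in> cells (nerve (sdposet n) le) m" and cD: "c ` {0..m} \<in> D2 n k w S" and th: "mono_map \<theta> p m"
  have ch: "ch n (c ` {0..m})" using img_ch c by (simp add: Cg_def)
  show "(act (nerve (sdposet n) le) \<theta> p m c) ` {0..p} \<in> D2 n k w S"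
    by (rule D2_closed[OF ch cD act_img_sub[OF th] _ assms]) simp
qed

lemma PLs_D2: "PLs n k \<subseteq> D2 n k w S" by (auto simp: PLs_eq D2_def D1s_def)

lemma sub_mono_fam: "D \<subseteq> D' \<Longrightarrow> sub le P D m \<subseteq> sub le P D' m" by (auto simp: sub_iff)

lemma stage2:
  assumes G1: "mmap le (sdposet n) (Mg n) (D1s n k) X W G1"
  and ag1: "\<forall>m. \<forall>c\<in>sub le (sdposet n) (PLs n k) m. G1 m c = F m c"
  and kn: "k \<le> n"
  and qc: "\<forall>N i. 0 < i \<longrightarrow> i < N \<longrightarrow> rlp (Delta N) (horn N i) X" and wc: "weakly_closed X W"
  shows "\<exists>G. mmap le (sdposet n) (Mg n) (D2 n k (MM n * MM n) {}) X W G \<and> (\<forall>m. \<forall>c\<in>sub le (sdposet n) (PLs n k) m. G m c = F m c)"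
proof -
  have "\<exists>G. mmap le (sdposet n) (Mg n) (D2 n k w {}) X W G \<and> (\<forall>m. \<forall>c\<in>sub le (sdposet n) (PLs n k) m. G m c = F m c)" for w
  proof (induction w)
    case 0 then show ?case using G1 ag1 unfolding D2_zero by blast
  next
    case (Suc w)
    then obtain G where G: "mmap le (sdposet n) (Mg n) (D2 n k w {}) X W G" and ag: "\<forall>m. \<forall>c\<in>sub le (sdposet n) (PLs n k) m. G m c = F m c"
      by blast
    have inner: "S \<subseteq> Sig n k w \<longrightarrow> (\<exists>G. mmap le (sdposet n) (Mg n) (D2 n k w S) X W G \<and> (\<forall>m. \<forall>c\<in>sub le (sdposet n) (PLs n k) m. G m c = F m c))"
      if "finite S" for S
      using that
    proof (induction S rule: finite_induct)
      case empty then show ?case using G ag by blast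
    next
      case (insert \<sigma> S)
      show ?case
      proof
        assume sub: "insert \<sigma> S \<subseteq> Sig n k w"
        then obtain G' where G': "mmap le (sdposet n) (Mg n) (D2 n k w S) X W G'" and ag': "\<forall>m. \<forall>c\<in>sub le (sdposet n) (PLs n k) m. G' m c = F m c"
          using insert.IH by blast
        have sig: "\<sigma> \<in> Sig n k w" and Ss: "S \<subseteq> Sig n k w" using sub by auto
        have chs: "ch n \<sigma>" and bin: "bb k \<sigma> \<in> \<sigma>" using sig by (auto simp: Sig_def)
        have pat: "\<forall>J. J \<subseteq> \<sigma> \<longrightarrow> J \<noteq> {} \<longrightarrow> (J \<in> D2 n k w S \<longleftrightarrow> \<not> (\<sigma> - {bb k \<sigma>} \<subseteq> J))"
          using Sig_pattern[OF sig insert.hyps(2) Ss _ _ kn] by blast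
        note sf = Sig_facts[OF sig kn]
        obtain G'' where G'': "mmap le (sdposet n) (Mg n) (D2 n k w S \<union> {C. C \<subseteq> \<sigma>}) X W G''"
          and ag'': "\<forall>m. \<forall>c\<in>sub le (sdposet n) (D2 n k w S) m. G'' m c = G' m c"
          using horn_attach[OF G' D2_Dcl[OF Ss kn] chs bin pat sf(1) sf(2) sf(3) qc wc] by blast
        have "D2 n k w S \<union> {C. C \<subseteq> \<sigma>} = D2 n k w (insert \<sigma> S)" by (auto simp: D2_def)
        moreover have "\<forall>m. \<forall>c\<in>sub le (sdposet n) (PLs n k) m. G'' m c = F m c"
        proof (intro allI ballI)
          fix m c assume c: "c \<in> sub le (sdposet n) (PLs n k) m"
          then have "c \<in> sub le (sdposet n) (D2 n k w S) m" using PLs_D2[of n k w S] by (auto simp: sub_iff)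
          then show "G'' m c = F m c" using ag'' ag' c by simp
        qed
        ultimately show "\<exists>G. mmap le (sdposet n) (Mg n) (D2 n k w (insert \<sigma> S)) X W G \<and> (\<forall>m. \<forall>c\<in>sub le (sdposet n) (PLs n k) m. G m c = F m c)"
          using G'' by auto
      qed
    qed
    obtain G2 where G2: "mmap le (sdposet n) (Mg n) (D2 n k w (Sig n k w)) X W G2" and ag2: "\<forall>m. \<forall>c\<in>sub le (sdposet n) (PLs n k) m. G2 m c = F m c"
      using inner[OF Sig_finite] by blast
    have "sub le (sdposet n) (D2 n k (Suc w) {}) m \<subseteq> sub le (sdposet n) (D2 n k w (Sig n k w)) m" for m
    proof
      fix c assume c: "c \<in> sub le (sdposet n) (D2 n k (Suc w) {}) m"
      then have cc: "c \<in> cells (Cg n) m" and cD: "c ` {0..m} \<in> D2 n k (Suc w) {}" by (auto simp: sub_iff Cg_def)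
      have "c ` {0..m} \<in> D2 n k w (Sig n k w)" using D2_cover[OF img_ch[OF cc] cD kn] .
      then show "c \<in> sub le (sdposet n) (D2 n k w (Sig n k w)) m" using c by (simp add: sub_iff)
    qed
    then show ?case using mmap_mono[OF G2] ag2 by blast
  qed
  then show ?thesis by blast
qed

end



lemma Bs_sup: "A \<subseteq> {0..n} \<Longrightarrow> {0..n} - {k} \<subseteq> A \<Longrightarrow> A = {0..n} - {k} \<or> A = {0..(n::nat)}"
  by blast

lemma smap_subsset_all: "smap (subsset B (cells B)) X f \<longleftrightarrow> smap B X f"
  by (simp add: smap_def)

context ordset
begin

lemma mm_univ: "marked_map (Cg n) (Mg n) X W G \<Longrightarrow> mmap le (sdposet n) (Mg n) UNIV X W G"
proof -
  assume G: "marked_map (Cg n) (Mg n) X W G"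
  have s: "sub le (sdposet n) UNIV = cells (Cg n)" by (auto simp: sub_iff Cg_def fun_eq_iff)
  have m: "Mg n \<inter> cells (Cg n) 1 = Mg n" by (auto simp: Mg_def)
  show ?thesis using G unfolding mmap_def s m marked_map_def smap_def by (simp add: Cg_def)
qed

lemma ext_b:
  assumes F: "mmap le (sdposet n) (Mg n) (PLs n k) X W F" and k0: "0 < k" and kn: "k < n"
  and qc: "\<forall>N i. 0 < i \<longrightarrow> i < N \<longrightarrow> rlp (Delta N) (horn N i) X" and wc: "weakly_closed X W"
  and lift: "mrlp (Lg n k) (Lmk n k) (LJg n k) X W"
  shows "\<exists>G. marked_map (Cg n) (Mg n) X W G \<and> (\<forall>j. \<forall>c\<in>sub le (sdposet n) (PLs n k) j. G j c = F j c)"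
proof -
  obtain G1 where G1: "mmap le (sdposet n) (Mg n) (D1s n k) X W G1" and ag1: "\<forall>m. \<forall>c\<in>sub le (sdposet n) (PLs n k) m. G1 m c = F m c"
    using stage1[OF F _ lift] kn by auto
  obtain G2 where G2: "mmap le (sdposet n) (Mg n) (D2 n k (MM n * MM n) {}) X W G2" and ag2: "\<forall>m. \<forall>c\<in>sub le (sdposet n) (PLs n k) m. G2 m c = F m c"
    using stage2[OF G1 ag1 _ qc wc] kn by auto
  have G2m: "marked_map (subsset (Cg n) (sub le (sdposet n) (D2 n k (MM n * MM n) {}))) (Mg n \<inter> sub le (sdposet n) (D2 n k (MM n * MM n) {}) 1) X W G2"
    using G2 by (simp add: mmap_def Cg_def)
  define Bs where "Bs = {0..n} - {k}"
  define pi where "pi A = (if A = Bs then {0..n} else A)" for A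
  define pc where "pc j c = (\<lambda>i. if i \<le> j then pi (c i) else undefined)" for j :: nat and c :: "nat \<Rightarrow> nat set"
  have pi_sd: "pi A \<noteq> {} \<and> pi A \<subseteq> {0..n}" if "A \<noteq> {} \<and> A \<subseteq> {0..n}" for A using that by (auto simp: pi_def)
  have pi_le: "le (pi A) (pi A')" if "A \<subseteq> {0..n}" "A' \<subseteq> {0..n}" "le A A'" for A A'
  proof -
    have "A' = Bs \<or> A' = {0..n}" if "Bs \<subseteq> A'" using Bs_sup[OF \<open>A' \<subseteq> {0..n}\<close>] that by (simp add: Bs_def)
    moreover have "A = Bs \<or> A = {0..n}" if "Bs \<subseteq> A" using Bs_sup[OF \<open>A \<subseteq> {0..n}\<close>] that by (simp add: Bs_def)
    ultimately show ?thesis using le_cases that unfolding pi_def Bs_def by auto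
  qed
  have muBs: "mu Bs = mu {0..n}"
  proof -
    have nB: "n \<in> Bs" "0 \<in> Bs" "finite Bs" "\<forall>x\<in>Bs. x \<le> n" using k0 kn by (auto simp: Bs_def)
    have "Max Bs = n" by (rule Max_eqI) (use nB in auto)
    moreover have "Min Bs = 0" by (rule Min_eqI) (use nB in auto)
    ultimately have "Max Bs = n" "Min Bs = 0" by auto
    then show ?thesis using le_cases Max_int Min_int by auto
  qed
  have mu_pi: "mu (pi A) = mu A" for A using muBs by (simp add: pi_def)
  have pc_cells: "pc j c \<in> cells (Cg n) j" if c: "c \<in> cells (Cg n) j" for j c
  proof -
    have 1: "\<forall>i\<le>j. pc j c i \<noteq> {} \<and> pc j c i \<subseteq> {0..n}" using c pi_sd unfolding cells_Cg pc_def by simp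
    have 2: "\<forall>i i'. i \<le> i' \<longrightarrow> i' \<le> j \<longrightarrow> le (pc j c i) (pc j c i')"
    proof (intro allI impI)
      fix i i' assume "i \<le> i'" "i' \<le> j"
      then have "c i \<subseteq> {0..n}" "c i' \<subseteq> {0..n}" "le (c i) (c i')" using c unfolding cells_Cg by auto
      then show "le (pc j c i) (pc j c i')" using pi_le \<open>i \<le> i'\<close> \<open>i' \<le> j\<close> unfolding pc_def by simp
    qed
    have 3: "\<forall>i>j. pc j c i = undefined" by (simp add: pc_def)
    show ?thesis unfolding cells_Cg using 1 2 3 by blast
  qed
  have BT: "Bs \<noteq> {0..n}"
  proof
    assume "Bs = {0..n}"
    then have "k \<in> Bs" using kn by simp
    then show False by (simp add: Bs_def)
  qed
  have pc_noB: "Bs \<notin> pc j c ` {0..j}" for j c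
  proof
    assume "Bs \<in> pc j c ` {0..j}"
    then obtain i where "i \<le> j" "Bs = pi (c i)" by (auto simp: pc_def)
    then show False using BT by (cases "c i = Bs") (auto simp: pi_def)
  qed
  have pc_sub: "pc j c \<in> sub le (sdposet n) (D2 n k (MM n * MM n) {}) j" if "c \<in> cells (Cg n) j" for j c
  proof -
    have "{0..n} - {k} \<notin> pc j c ` {0..j}" using pc_noB unfolding Bs_def .
    then have "pc j c ` {0..j} \<in> D2 n k (MM n * MM n) {}" using D2_final[OF img_ch[OF pc_cells[OF that]]] kn by simp
    then show ?thesis using pc_cells[OF that] unfolding sub_iff Cg_def by simp
  qed
  define G where "G j c = G2 j (pc j c)" for j c
  have Gm: "marked_map (Cg n) (Mg n) X W G"
    unfolding marked_map_def smap_def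
  proof (intro conjI allI impI ballI)
    fix j c assume "c \<in> cells (Cg n) j"
    then show "G j c \<in> cells X j" using pc_sub G2m unfolding G_def marked_map_def smap_def by auto
  next
    fix \<theta> p j c assume th: "mono_map \<theta> p j" and c: "c \<in> cells (Cg n) j"
    have "pc p (act (Cg n) \<theta> p j c) = act (Cg n) \<theta> p j (pc j c)"
      using th unfolding pc_def Cg_def act_nerve mono_map_def by (auto simp: fun_eq_iff)
    then show "G p (act (Cg n) \<theta> p j c) = act X \<theta> p j (G j c)"
      using G2m pc_sub[OF c] th unfolding G_def marked_map_def smap_def by auto
  next
    fix e assume e: "e \<in> Mg n"
    then have ec: "e \<in> cells (Cg n) 1" and me: "mu (e 0) = mu (e 1)" by (auto simp: Mg_def)
    have "pc 1 e \<in> Mg n" using pc_cells[OF ec] me mu_pi by (simp add: Mg_def pc_def)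
    then show "G 1 e \<in> W" using G2m pc_sub[OF ec] unfolding G_def marked_map_def by auto
  qed
  have ag: "G j c = F j c" if c: "c \<in> sub le (sdposet n) (PLs n k) j" for j c
  proof -
    have cc: "c \<in> cells (Cg n) j" and cP: "\<Union>(c ` {0..j}) \<union> {k} \<noteq> {0..n}" using c by (auto simp: sub_iff Cg_def PLs_eq)
    have "Bs \<notin> c ` {0..j}" using PL_noB[OF img_ch[OF cc] cP] kn by (simp add: Bs_def)
    then have "pc j c = c" using cc unfolding pc_def pi_def cells_Cg by (auto simp: fun_eq_iff)
    then show ?thesis using ag2 c by (simp add: G_def)
  qed
  show ?thesis using Gm ag by blast
qed

lemma thm_b:
  assumes qcX: "quasicategory X" and wc: "weakly_closed X W"
  and lifts: "\<forall>n k. 0 < k \<longrightarrow> k < n \<longrightarrow> mrlp (Lg n k) (Lmk n k) (LJg n k) X W"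
  shows "quasicategory (Ex X W)"
  unfolding quasicategory_def
proof (intro conjI allI impI)
  show "is_sset (Ex X W)" by (rule is_sset_Ex)
  have qc: "\<forall>N i. 0 < i \<longrightarrow> i < N \<longrightarrow> rlp (Delta N) (horn N i) X" using qcX by (simp add: quasicategory_def)
  fix n k :: nat assume k0: "0 < k" and kn: "k < n"
  show "rlp (Delta n) (horn n k) (Ex X W)"
    unfolding rlp_def
  proof (intro allI impI)
    fix f assume f: "smap (subsset (Delta n) (horn n k)) (Ex X W) f"
    obtain F where F: "mmap le (sdposet n) (Mg n) (PLs n k) X W F"
      and rel: "\<forall>m s j d. s \<in> horn n k m \<longrightarrow> d \<in> cells (Cg m) j \<longrightarrow> f m s j d = F j (push s j d)"
      using to_sd[OF f] kn by auto
    obtain G where G: "marked_map (Cg n) (Mg n) X W G" and ag: "\<forall>j. \<forall>c\<in>sub le (sdposet n) (PLs n k) j. G j c = F j c"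
      using ext_b[OF F k0 kn qc wc] lifts k0 kn by blast
    define g where "g = (\<lambda>m s j d. if d \<in> cells (Cg m) j then G j (push s j d) else undefined)"
    have "smap (subsset (Delta n) (cells (Delta n))) (Ex X W) g"
      unfolding g_def by (rule push_map[OF mm_univ[OF G]]) auto
    then have gs: "smap (Delta n) (Ex X W) g" by (simp add: smap_subsset_all)
    have ext: "g m s = f m s" if s: "s \<in> horn n k m" for m s
    proof (intro ext)
      fix j d
      show "g m s j d = f m s j d"
      proof (cases "d \<in> cells (Cg m) j")
        case True
        have sc: "s \<in> cells (Delta n) m" using s by (simp add: horn_def)
        have pc: "push s j d \<in> cells (Cg n) j" using push_cells[OF Delta_mono_map[OF sc] True] .
        have "push s j d i \<subseteq> s ` {0..m}" if "i \<le> j" for i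
          using True that unfolding push_def cells_Cg by (simp add: image_mono)
        then have "\<Union>(push s j d ` {0..j}) \<union> {k} \<subseteq> s ` {0..m} \<union> {k}" by fastforce
        moreover have "s ` {0..m} \<union> {k} \<noteq> {0..n}" using s by (simp add: horn_def)
        moreover have "s ` {0..m} \<union> {k} \<subseteq> {0..n}" using sc kn unfolding cells_Delta by auto
        ultimately have "\<Union>(push s j d ` {0..j}) \<union> {k} \<noteq> {0..n}" by blast
        then have "push s j d \<in> sub le (sdposet n) (PLs n k) j" using pc by (simp add: sub_iff PLs_eq Cg_def)
        then show ?thesis using ag rel s True by (simp add: g_def)
      next
        case False
        have "f m s \<in> cells (Ex X W) m" using f s unfolding smap_def by auto
        then show ?thesis using False by (simp add: g_def cells_Ex)
      qed
    qed
    show "\<exists>g. smap (Delta n) (Ex X W) g \<and> (\<forall>m. \<forall>a\<in>horn n k m. g m a = f m a)"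
      using gs ext by blast
  qed
qed

end



context ordset
begin

lemma push_PL:
  assumes s: "s \<in> horn N k' m" and d: "d \<in> cells (Cg m) j" and kN: "k' \<le> N"
  shows "push s j d \<in> sub le (sdposet N) (PLs N k') j"
proof -
  have sc: "s \<in> cells (Delta N) m" using s by (simp add: horn_def)
  have pc: "push s j d \<in> cells (Cg N) j" using push_cells[OF Delta_mono_map[OF sc] d] .
  have "push s j d i \<subseteq> s ` {0..m}" if "i \<le> j" for i
    using d that unfolding push_def cells_Cg by (simp add: image_mono)
  then have "\<Union>(push s j d ` {0..j}) \<union> {k'} \<subseteq> s ` {0..m} \<union> {k'}" by fastforce
  moreover have "s ` {0..m} \<union> {k'} \<noteq> {0..N}" using s by (simp add: horn_def)
  moreover have "s ` {0..m} \<union> {k'} \<subseteq> {0..N}" using sc kN unfolding cells_Delta by auto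
  ultimately have "\<Union>(push s j d ` {0..j}) \<union> {k'} \<noteq> {0..N}" by blast
  then show ?thesis using pc by (simp add: sub_iff PLs_eq Cg_def)
qed

lemma a_generic:
  assumes qE: "rlp (Delta N) (horn N k') (Ex X W)" and kN: "k' \<le> N"
  and i_in: "\<forall>A\<in>Lposet n k. iL A \<in> sdposet N"
  and i_le: "\<forall>A\<in>Lposet n k. \<forall>A'\<in>Lposet n k. le A A' \<longrightarrow> le (iL A) (iL A')"
  and i_mu: "\<forall>A\<in>Lposet n k. \<forall>A'\<in>Lposet n k. le A A' \<longrightarrow> mu A = mu A' \<longrightarrow> mu (iL A) = mu (iL A')"
  and ri: "\<forall>A\<in>Lposet n k. A \<noteq> {0..n} \<longrightarrow> rL (iL A) = A"
  and i_PL: "\<forall>m c. c \<in> LJg n k m \<longrightarrow> \<Union>(iL ` c ` {0..m}) \<union> {k'} \<noteq> {0..N}"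
  and r_in: "\<forall>m c. c \<in> sub le (sdposet N) (PLs N k') m \<longrightarrow> (\<forall>i\<le>m. rL (c i) \<in> Lposet n k \<and> rL (c i) \<noteq> {0..n})"
  and r_le: "\<forall>A\<in>sdposet N. \<forall>A'\<in>sdposet N. le A A' \<longrightarrow> le (rL A) (rL A')"
  and r_mu: "\<forall>A\<in>sdposet N. \<forall>A'\<in>sdposet N. le A A' \<longrightarrow> mu A = mu A' \<longrightarrow> mu (rL A) = mu (rL A')"
  shows "mrlp (Lg n k) (Lmk n k) (LJg n k) X W"
  unfolding mrlp_def
proof (intro allI impI)
  fix \<phi> assume \<phi>: "marked_map (subsset (Lg n k) (LJg n k)) (Lmk n k \<inter> LJg n k 1) X W \<phi>"
  define rc where "rc j c = (\<lambda>i. if i \<le> j then rL (c i) else undefined)" for j :: nat and c :: "nat \<Rightarrow> nat set"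
  define ic where "ic j c = (\<lambda>i. if i \<le> j then iL (c i) else undefined)" for j :: nat and c :: "nat \<Rightarrow> nat set"
  define F where "F j c = \<phi> j (rc j c)" for j c
  have rc_LJ: "rc j c \<in> LJg n k j" if c: "c \<in> sub le (sdposet N) (PLs N k') j" for j c
  proof -
    have cc: "c \<in> cells (nerve (sdposet N) le) j" using c by (simp add: sub_iff)
    have 1: "\<forall>i\<le>j. rc j c i \<in> Lposet n k \<and> rc j c i \<noteq> {0..n}" using r_in c by (simp add: rc_def)
    have 2: "\<forall>i i'. i \<le> i' \<longrightarrow> i' \<le> j \<longrightarrow> le (rc j c i) (rc j c i')"
      using r_le cc unfolding cells_nerve rc_def by auto
    have 3: "\<forall>i>j. rc j c i = undefined" by (simp add: rc_def)
    show ?thesis using 1 2 3 unfolding LJg_def Lg_def cells_nerve by auto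
  qed
  have \<phi>c: "\<phi> j x \<in> cells X j" if "x \<in> LJg n k j" for j x using \<phi> that unfolding marked_map_def smap_def by auto
  have Fm: "mmap le (sdposet N) (Mg N) (PLs N k') X W F"
    unfolding mmap_def marked_map_def smap_def
  proof (intro conjI allI impI ballI)
    fix j c assume "c \<in> cells (subsset (nerve (sdposet N) le) (sub le (sdposet N) (PLs N k'))) j"
    then show "F j c \<in> cells X j" using \<phi>c rc_LJ by (simp add: F_def)
  next
    fix \<theta> p j c assume th: "mono_map \<theta> p j" and "c \<in> cells (subsset (nerve (sdposet N) le) (sub le (sdposet N) (PLs N k'))) j"
    then have c: "c \<in> sub le (sdposet N) (PLs N k') j" by simp
    have "rc p (act (nerve (sdposet N) le) \<theta> p j c) = act (Lg n k) \<theta> p j (rc j c)"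
      using th unfolding rc_def Lg_def act_nerve mono_map_def by (auto simp: fun_eq_iff)
    then show "F p (act (subsset (nerve (sdposet N) le) (sub le (sdposet N) (PLs N k'))) \<theta> p j c) = act X \<theta> p j (F j c)"
      using \<phi> rc_LJ[OF c] th unfolding F_def marked_map_def smap_def by auto
  next
    fix e assume e: "e \<in> Mg N \<inter> sub le (sdposet N) (PLs N k') 1"
    then have ec: "e \<in> cells (Cg N) 1" and me: "mu (e 0) = mu (e 1)" and eP: "e \<in> sub le (sdposet N) (PLs N k') 1"
      by (auto simp: Mg_def)
    have "e 0 \<in> sdposet N" "e 1 \<in> sdposet N" "le (e 0) (e 1)" using ec unfolding Cg_def cells_nerve by auto
    then have "mu (rL (e 0)) = mu (rL (e 1))" using r_mu me by blast
    then have "rc 1 e \<in> Lmk n k" using rc_LJ[OF eP] by (simp add: Lmk_def LJg_def rc_def)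
    then show "F 1 e \<in> W" using \<phi> rc_LJ[OF eP] unfolding F_def marked_map_def by auto
  qed
  define f where "f = (\<lambda>m s j d. if d \<in> cells (Cg m) j then F j (push s j d) else undefined)"
  have fs: "smap (subsset (Delta N) (horn N k')) (Ex X W) f"
    unfolding f_def
  proof (rule push_map[OF Fm])
    show "\<forall>m. horn N k' m \<subseteq> cells (Delta N) m" by (auto simp: horn_def)
    show "\<forall>m s j d. s \<in> horn N k' m \<longrightarrow> d \<in> cells (Cg m) j \<longrightarrow> push s j d ` {0..j} \<in> PLs N k'"
      using push_PL kN by (auto simp: sub_iff)
  qed
  obtain g where gs: "smap (Delta N) (Ex X W) g" and gf: "\<forall>m. \<forall>a\<in>horn N k' m. g m a = f m a"
    using qE fs unfolding rlp_def by blast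
  define idN where "idN = (\<lambda>i. if i \<le> N then i else (undefined::nat))"
  have idc: "idN \<in> cells (Delta N) N" by (auto simp: cells_Delta idN_def)
  define G where "G = g N idN"
  have GE: "G \<in> cells (Ex X W) N" using gs idc unfolding G_def smap_def by auto
  then have Gm: "marked_map (Cg N) (Mg N) X W G" by (simp add: cells_Ex)
  have GF: "G j d = F j d" if d: "d \<in> sub le (sdposet N) (PLs N k') j" for j d
  proof -
    have dc: "d \<in> cells (Cg N) j" using d by (simp add: sub_iff Cg_def)
    define S where "S = \<Union>(d ` {0..j}) \<union> {k'}"
    have SN: "S \<subseteq> {0..N}" "S \<noteq> {}" "S \<noteq> {0..N}" "k' \<in> S"
      using d dc kN unfolding S_def sub_iff PLs_eq cells_Cg by auto
    have rh: "rho N S \<in> horn N k' N"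
      using rho_cells[OF SN(1,2)] rho_img[OF SN(1,2)] SN(3,4) unfolding horn_def by (simp add: insert_absorb)
    have rc: "rho N S \<in> cells (Delta N) N" using rho_cells[OF SN(1,2)] .
    have "act (Delta N) (rho N S) N N idN = rho N S"
      using rc unfolding act_Delta idN_def cells_Delta by (auto simp: fun_eq_iff)
    then have "g N (rho N S) = act (Ex X W) (rho N S) N N G"
      using gs Delta_mono_map[OF rc] idc unfolding G_def smap_def by metis
    moreover have "g N (rho N S) = f N (rho N S)" using gf rh by blast
    ultimately have eq: "f N (rho N S) j d = G j (push (rho N S) j d)" using dc by (simp add: act_Ex)
    have "push (rho N S) j d = d"
    proof -
      have "rho N S ` (d i) = d i" if "i \<le> j" for i
      proof -
        have "d i \<subseteq> S" using that by (auto simp: S_def)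
        then have "\<forall>x\<in>d i. rho N S x = x" using rho_fix[OF SN(1)] by blast
        then show ?thesis by (simp add: image_def)
      qed
      then show ?thesis using dc unfolding push_def cells_Cg by (auto simp: fun_eq_iff)
    qed
    then show ?thesis using eq dc by (simp add: f_def)
  qed
  define \<psi> where "\<psi> j c = G j (ic j c)" for j c
  have ic_cells: "ic j c \<in> cells (Cg N) j" if c: "c \<in> cells (Lg n k) j" for j c
  proof -
    have 1: "\<forall>i\<le>j. ic j c i \<in> sdposet N" using c i_in unfolding Lg_def cells_nerve ic_def by auto
    have 2: "\<forall>i i'. i \<le> i' \<longrightarrow> i' \<le> j \<longrightarrow> le (ic j c i) (ic j c i')"
      using c i_le unfolding Lg_def cells_nerve ic_def by auto
    have 3: "\<forall>i>j. ic j c i = undefined" by (simp add: ic_def)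
    show ?thesis using 1 2 3 unfolding Cg_def cells_nerve by auto
  qed
  have \<psi>m: "marked_map (Lg n k) (Lmk n k) X W \<psi>"
    unfolding marked_map_def smap_def
  proof (intro conjI allI impI ballI)
    fix j c assume "c \<in> cells (Lg n k) j"
    then show "\<psi> j c \<in> cells X j" using Gm ic_cells unfolding \<psi>_def marked_map_def smap_def by auto
  next
    fix \<theta> p j c assume th: "mono_map \<theta> p j" and c: "c \<in> cells (Lg n k) j"
    have "ic p (act (Lg n k) \<theta> p j c) = act (Cg N) \<theta> p j (ic j c)"
      using th unfolding ic_def Lg_def Cg_def act_nerve mono_map_def by (auto simp: fun_eq_iff)
    then show "\<psi> p (act (Lg n k) \<theta> p j c) = act X \<theta> p j (\<psi> j c)"
      using Gm ic_cells[OF c] th unfolding \<psi>_def marked_map_def smap_def by auto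
  next
    fix e assume e: "e \<in> Lmk n k"
    then have ec: "e \<in> cells (Lg n k) 1" and me: "mu (e 0) = mu (e 1)" by (auto simp: Lmk_def)
    have "e 0 \<in> Lposet n k" "e 1 \<in> Lposet n k" "le (e 0) (e 1)" using ec unfolding Lg_def cells_nerve by auto
    then have "mu (iL (e 0)) = mu (iL (e 1))" using i_mu me by blast
    then have "ic 1 e \<in> Mg N" using ic_cells[OF ec] by (simp add: Mg_def ic_def)
    then show "\<psi> 1 e \<in> W" using Gm unfolding \<psi>_def marked_map_def by auto
  qed
  have agr: "\<psi> j c = \<phi> j c" if c: "c \<in> LJg n k j" for j c
  proof -
    have cc: "c \<in> cells (Lg n k) j" using c by (simp add: LJg_def)
    have "ic j c \<in> sub le (sdposet N) (PLs N k') j"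
    proof -
      have "ic j c ` {0..j} = iL ` c ` {0..j}" by (auto simp: ic_def)
      then show ?thesis using i_PL c ic_cells[OF cc] by (simp add: sub_iff PLs_eq Cg_def)
    qed
    then have "\<psi> j c = F j (ic j c)" using GF by (simp add: \<psi>_def)
    moreover have "rc j (ic j c) = c"
      using cc c ri unfolding rc_def ic_def LJg_def Lg_def cells_nerve by (auto simp: fun_eq_iff)
    ultimately show ?thesis by (simp add: F_def)
  qed
  show "\<exists>g. marked_map (Lg n k) (Lmk n k) X W g \<and> (\<forall>n'. \<forall>a\<in>LJg n k n'. g n' a = \<phi> n' a)"
    using \<psi>m agr by blast
qed

end



context ordset
begin

lemma thm_a_inner:
  assumes qE: "quasicategory (Ex X W)" and k0: "0 < k" and kn: "k < n"
  shows "mrlp (Lg n k) (Lmk n k) (LJg n k) X W"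
proof (rule a_generic[where N = n and k' = k and iL = id and rL = "\<lambda>A. A \<union> {k}"])
  show "rlp (Delta n) (horn n k) (Ex X W)" using qE k0 kn by (simp add: quasicategory_def)
  show "k \<le> n" using kn by simp
  show "\<forall>A\<in>Lposet n k. id A \<in> sdposet n" using Lposet_sd by auto
  show "\<forall>A\<in>Lposet n k. \<forall>A'\<in>Lposet n k. le A A' \<longrightarrow> le (id A) (id A')" by simp
  show "\<forall>A\<in>Lposet n k. \<forall>A'\<in>Lposet n k. le A A' \<longrightarrow> mu A = mu A' \<longrightarrow> mu (id A) = mu (id A')" by simp
  show "\<forall>A\<in>Lposet n k. A \<noteq> {0..n} \<longrightarrow> id A \<union> {k} = A" by (auto simp: Lposet_def)
  show "\<forall>m c. c \<in> LJg n k m \<longrightarrow> \<Union>(id ` c ` {0..m}) \<union> {k} \<noteq> {0..n}"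
  proof (intro allI impI)
    fix m c assume c: "c \<in> LJg n k m"
    then have cc: "c \<in> cells (Lg n k) m" by (simp add: LJg_def)
    obtain i where i: "i \<le> m" "\<Union>(c ` {0..m}) = c i" using ch_union[OF img_ch[OF Lg_cells[OF cc]]] by auto
    have "k \<in> c i" using cc i unfolding Lg_def cells_nerve Lposet_def by auto
    then show "\<Union>(id ` c ` {0..m}) \<union> {k} \<noteq> {0..n}" using i c unfolding LJg_def by auto
  qed
  show "\<forall>m c. c \<in> sub le (sdposet n) (PLs n k) m \<longrightarrow> (\<forall>i\<le>m. c i \<union> {k} \<in> Lposet n k \<and> c i \<union> {k} \<noteq> {0..n})"
  proof (intro allI impI conjI)
    fix m c i assume c: "c \<in> sub le (sdposet n) (PLs n k) m" and i: "i \<le> m"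
    have ci: "c i \<subseteq> {0..n}" using c i unfolding sub_iff cells_nerve sdposet_def by auto
    then show "c i \<union> {k} \<in> Lposet n k" using kn by (auto simp: Lposet_def)
    have U: "\<Union>(c ` {0..m}) \<union> {k} \<noteq> {0..n}" using c by (simp add: sub_iff PLs_eq)
    have "c i \<union> {k} \<subseteq> \<Union>(c ` {0..m}) \<union> {k}" using i by auto
    moreover have "\<Union>(c ` {0..m}) \<union> {k} \<subseteq> {0..n}" using c kn unfolding sub_iff cells_nerve sdposet_def by auto
    ultimately show "c i \<union> {k} \<noteq> {0..n}" using U by blast
  qed
  show "\<forall>A\<in>sdposet n. \<forall>A'\<in>sdposet n. le A A' \<longrightarrow> le (A \<union> {k}) (A' \<union> {k})" using le_cases by auto
  show "\<forall>A\<in>sdposet n. \<forall>A'\<in>sdposet n. le A A' \<longrightarrow> mu A = mu A' \<longrightarrow> mu (A \<union> {k}) = mu (A' \<union> {k})"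
  proof (intro ballI impI)
    fix A A' assume A: "A \<in> sdposet n" "A' \<in> sdposet n" and "mu A = mu A'"
    have f: "finite A" "A \<noteq> {}" "finite A'" "A' \<noteq> {}" using A by (auto simp: sdposet_def intro: finite_subset)
    show "mu (A \<union> {k}) = mu (A' \<union> {k})"
      using le_cases \<open>mu A = mu A'\<close> Max_insert[OF f(1,2)] Max_insert[OF f(3,4)] Min_insert[OF f(1,2)] Min_insert[OF f(3,4)]
      by auto
  qed
qed

end

interpretation P: ordset "(\<subseteq>)" Max by unfold_locales simp
interpretation M: ordset "(\<supseteq>)" Min by unfold_locales simp

lemma P_Ex: "P.Ex X W = Ex_plus X W"
proof -
  have "P.Cg = sd" by (auto simp: fun_eq_iff P.Cg_def sd_def)
  moreover have "P.Mg = sdmark" by (auto simp: fun_eq_iff P.Mg_def sdmark_def P.Cg_def sd_def)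
  ultimately show ?thesis by (simp add: P.Ex_def Ex_plus_def)
qed

lemma M_Ex: "M.Ex X W = Ex_op_plus X W"
proof -
  have "M.Cg = sdop" by (auto simp: fun_eq_iff M.Cg_def sdop_def)
  moreover have "M.Mg = sdopmark" by (auto simp: fun_eq_iff M.Mg_def sdopmark_def M.Cg_def sdop_def)
  ultimately show ?thesis by (simp add: M.Ex_def Ex_op_plus_def)
qed

lemma P_L: "P.Lg n k = L n k" "P.Lmk n k = Lmark n k" "P.LJg n k = LJ n k"
  by (auto simp: P.Lg_def L_def P.Lmk_def Lmark_def P.LJg_def LJ_def fun_eq_iff)

lemma M_L: "M.Lg n k = R n k" "M.Lmk n k = Rmark n k" "M.LJg n k = RJ n k"
  by (auto simp: M.Lg_def R_def M.Lmk_def Rmark_def M.LJg_def RJ_def fun_eq_iff)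



lemma special_P:
  assumes qE: "quasicategory (Ex_plus X W)" and n2: "2 \<le> n"
  shows "mrlp (L n n) (Lmark n n) (LJ n n) X W"
proof -
  define iL where "iL A = (A - {n}) \<union> {Suc n}" for A :: "nat set"
  define rL where "rL A = (if Suc n \<in> A then (A \<inter> {0..<n}) \<union> {n} else {n})" for A :: "nat set"
  have "mrlp (P.Lg n n) (P.Lmk n n) (P.LJg n n) X W"
  proof (rule P.a_generic[where N = "Suc n" and k' = n and iL = iL and rL = rL])
    show "rlp (Delta (Suc n)) (horn (Suc n) n) (P.Ex X W)" using qE n2 by (simp add: quasicategory_def P_Ex)
    show "n \<le> Suc n" by simp
    show "\<forall>A\<in>Lposet n n. iL A \<in> sdposet (Suc n)" by (auto simp: iL_def Lposet_def sdposet_def)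
    show "\<forall>A\<in>Lposet n n. \<forall>A'\<in>Lposet n n. A \<subseteq> A' \<longrightarrow> iL A \<subseteq> iL A'" by (auto simp: iL_def)
    have miL: "Max (iL A) = Suc n" if "A \<subseteq> {0..n}" for A
      by (rule Max_eqI) (use that in \<open>auto simp: iL_def intro: finite_subset\<close>)
    show "\<forall>A\<in>Lposet n n. \<forall>A'\<in>Lposet n n. A \<subseteq> A' \<longrightarrow> Max A = Max A' \<longrightarrow> Max (iL A) = Max (iL A')"
      using miL by (auto simp: Lposet_def)
    show "\<forall>A\<in>Lposet n n. A \<noteq> {0..n} \<longrightarrow> rL (iL A) = A"
    proof (intro ballI impI)
      fix A assume "A \<in> Lposet n n"
      then have A: "A \<subseteq> {0..n}" "n \<in> A" by (auto simp: Lposet_def)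
      show "rL (iL A) = A"
      proof -
        have "Suc n \<in> iL A" by (simp add: iL_def)
        moreover have "(iL A \<inter> {0..<n}) \<union> {n} = A" using A by (auto simp: iL_def)
        ultimately show ?thesis by (simp add: rL_def)
      qed
    qed
    show "\<forall>m c. c \<in> P.LJg n n m \<longrightarrow> \<Union>(iL ` c ` {0..m}) \<union> {n} \<noteq> {0..Suc n}"
    proof (intro allI impI)
      fix m c assume c: "c \<in> P.LJg n n m"
      then have cc: "c \<in> cells (P.Lg n n) m" by (simp add: P.LJg_def)
      obtain i where i: "i \<le> m" "\<Union>(c ` {0..m}) = c i" using ch_union[OF P.img_ch[OF P.Lg_cells[OF cc]]] by auto
      have ci: "c i \<subseteq> {0..n}" "n \<in> c i" "c i \<noteq> {0..n}" using cc c i unfolding P.Lg_def cells_nerve Lposet_def P.LJg_def by auto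
      then have "\<not> {0..n} \<subseteq> c i" by auto
      then obtain x where "x \<in> {0..n}" "x \<notin> c i" by blast
      then have x: "x \<le> n" "x \<notin> c i" by auto
      then have xn: "x \<noteq> n" using ci by auto
      have "x \<notin> \<Union>(iL ` c ` {0..m}) \<union> {n}"
      proof
        assume "x \<in> \<Union>(iL ` c ` {0..m}) \<union> {n}"
        then obtain j where "j \<le> m" "x \<in> iL (c j)" using xn by auto
        then have "x \<in> c j" using x by (auto simp: iL_def)
        then have "x \<in> c i" using i \<open>j \<le> m\<close> by auto
        then show False using x by simp
      qed
      moreover have "x \<in> {0..Suc n}" using x by simp
      ultimately show "\<Union>(iL ` c ` {0..m}) \<union> {n} \<noteq> {0..Suc n}" by blast
    qed
    show "\<forall>m c. c \<in> sub (\<subseteq>) (sdposet (Suc n)) (P.PLs (Suc n) n) m \<longrightarrow> (\<forall>i\<le>m. rL (c i) \<in> Lposet n n \<and> rL (c i) \<noteq> {0..n})"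
    proof (intro allI impI conjI)
      fix m c i assume c: "c \<in> sub (\<subseteq>) (sdposet (Suc n)) (P.PLs (Suc n) n) m" and i: "i \<le> m"
      have ci: "c i \<subseteq> {0..Suc n}" using c i unfolding sub_iff cells_nerve sdposet_def by auto
      show "rL (c i) \<in> Lposet n n" by (auto simp: rL_def Lposet_def)
      show "rL (c i) \<noteq> {0..n}"
      proof (cases "Suc n \<in> c i")
        case True
        have U: "\<Union>(c ` {0..m}) \<union> {n} \<noteq> {0..Suc n}" using c by (simp add: sub_iff P.PLs_eq)
        have Us: "\<Union>(c ` {0..m}) \<union> {n} \<subseteq> {0..Suc n}" using c unfolding sub_iff cells_nerve sdposet_def by auto
        obtain x where x0: "x \<in> {0..Suc n}" "x \<notin> \<Union>(c ` {0..m}) \<union> {n}" using U Us by blast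
        then have x: "x \<le> Suc n" "x \<notin> \<Union>(c ` {0..m}) \<union> {n}" by auto
        have "x \<noteq> Suc n" using x True i by auto
        then have "x < n" using x by auto
        moreover have "x \<notin> c i" using x i by auto
        ultimately have "x \<notin> rL (c i)" by (auto simp: rL_def)
        then show ?thesis using \<open>x < n\<close> by auto
      next
        case False
        then have "rL (c i) = {n}" by (simp add: rL_def)
        moreover have "0 \<in> {0..n}" "0 \<notin> {n}" using n2 by auto
        ultimately show ?thesis by blast
      qed
    qed
    show "\<forall>A\<in>sdposet (Suc n). \<forall>A'\<in>sdposet (Suc n). A \<subseteq> A' \<longrightarrow> rL A \<subseteq> rL A'"
      by (auto simp: rL_def)
    have mrL: "Max (rL A) = n" for A
      by (rule Max_eqI) (auto simp: rL_def split: if_split_asm)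
    show "\<forall>A\<in>sdposet (Suc n). \<forall>A'\<in>sdposet (Suc n). A \<subseteq> A' \<longrightarrow> Max A = Max A' \<longrightarrow> Max (rL A) = Max (rL A')"
      using mrL by simp
  qed
  then show ?thesis by (simp add: P_L)
qed

lemma special_M:
  assumes qE: "quasicategory (Ex_op_plus X W)" and n2: "2 \<le> n"
  shows "mrlp (R n 0) (Rmark n 0) (RJ n 0) X W"
proof -
  define iL where "iL A = insert 0 (Suc ` (A - {0}))" for A :: "nat set"
  define rL where "rL A = (if 0 \<in> A then insert 0 ((\<lambda>x. x - 1) ` (A \<inter> {2..})) else {0})" for A :: "nat set"
  have "mrlp (M.Lg n 0) (M.Lmk n 0) (M.LJg n 0) X W"
  proof (rule M.a_generic[where N = "Suc n" and k' = 1 and iL = iL and rL = rL])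
    show "rlp (Delta (Suc n)) (horn (Suc n) 1) (M.Ex X W)" using qE n2 by (simp add: quasicategory_def M_Ex)
    show "1 \<le> Suc n" by simp
    show "\<forall>A\<in>Lposet n 0. iL A \<in> sdposet (Suc n)" by (auto simp: iL_def Lposet_def sdposet_def)
    show "\<forall>A\<in>Lposet n 0. \<forall>A'\<in>Lposet n 0. A \<supseteq> A' \<longrightarrow> iL A \<supseteq> iL A'" by (auto simp: iL_def)
    have miL: "Min (iL A) = 0" if "A \<subseteq> {0..n}" for A
      by (rule Min_eqI) (use that in \<open>auto simp: iL_def intro: finite_subset\<close>)
    show "\<forall>A\<in>Lposet n 0. \<forall>A'\<in>Lposet n 0. A \<supseteq> A' \<longrightarrow> Min A = Min A' \<longrightarrow> Min (iL A) = Min (iL A')"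
      using miL by (auto simp: Lposet_def)
    show "\<forall>A\<in>Lposet n 0. A \<noteq> {0..n} \<longrightarrow> rL (iL A) = A"
    proof (intro ballI impI)
      fix A assume "A \<in> Lposet n 0"
      then have A: "0 \<in> A" by (auto simp: Lposet_def)
      have "iL A \<inter> {2..} = Suc ` (A - {0})" by (auto simp: iL_def)
      moreover have "(\<lambda>x. x - 1) ` (Suc ` (A - {0})) = A - {0}" by (auto simp: image_image)
      ultimately have "rL (iL A) = insert 0 (A - {0})" by (simp add: rL_def iL_def)
      then show "rL (iL A) = A" using A by auto
    qed
    show "\<forall>m c. c \<in> M.LJg n 0 m \<longrightarrow> \<Union>(iL ` c ` {0..m}) \<union> {1} \<noteq> {0..Suc n}"
    proof (intro allI impI)
      fix m c assume c: "c \<in> M.LJg n 0 m"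
      then have cc: "c \<in> cells (M.Lg n 0) m" by (simp add: M.LJg_def)
      obtain i where i: "i \<le> m" "\<Union>(c ` {0..m}) = c i" using ch_union[OF M.img_ch[OF M.Lg_cells[OF cc]]] by auto
      have ci: "c i \<subseteq> {0..n}" "0 \<in> c i" "c i \<noteq> {0..n}" using cc c i unfolding M.Lg_def cells_nerve Lposet_def M.LJg_def by auto
      then have "\<not> {0..n} \<subseteq> c i" by auto
      then have "\<not> {0..n} \<subseteq> c i" by auto
      then obtain x where "x \<in> {0..n}" "x \<notin> c i" by blast
      then have x: "x \<le> n" "x \<notin> c i" by auto
      then have x0: "x \<noteq> 0" using ci by auto
      have "Suc x \<notin> \<Union>(iL ` c ` {0..m}) \<union> {1}"
      proof
        assume "Suc x \<in> \<Union>(iL ` c ` {0..m}) \<union> {1}"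
        then obtain j where "j \<le> m" "Suc x \<in> iL (c j)" using x0 by auto
        then have "x \<in> c j" by (auto simp: iL_def)
        then have "x \<in> c i" using i \<open>j \<le> m\<close> by auto
        then show False using x by simp
      qed
      moreover have "Suc x \<in> {0..Suc n}" using x by simp
      ultimately show "\<Union>(iL ` c ` {0..m}) \<union> {1} \<noteq> {0..Suc n}" by blast
    qed
    show "\<forall>m c. c \<in> sub (\<supseteq>) (sdposet (Suc n)) (M.PLs (Suc n) 1) m \<longrightarrow> (\<forall>i\<le>m. rL (c i) \<in> Lposet n 0 \<and> rL (c i) \<noteq> {0..n})"
    proof (intro allI impI conjI)
      fix m c i assume c: "c \<in> sub (\<supseteq>) (sdposet (Suc n)) (M.PLs (Suc n) 1) m" and i: "i \<le> m"
      have ci: "c i \<subseteq> {0..Suc n}" using c i unfolding sub_iff cells_nerve sdposet_def by auto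
      show "rL (c i) \<in> Lposet n 0" using ci by (auto simp: rL_def Lposet_def)
      show "rL (c i) \<noteq> {0..n}"
      proof (cases "0 \<in> c i")
        case True
        have U: "\<Union>(c ` {0..m}) \<union> {1} \<noteq> {0..Suc n}" using c by (simp add: sub_iff M.PLs_eq)
        have Us: "\<Union>(c ` {0..m}) \<union> {1} \<subseteq> {0..Suc n}" using c unfolding sub_iff cells_nerve sdposet_def by auto
        obtain x where x0: "x \<in> {0..Suc n}" "x \<notin> \<Union>(c ` {0..m}) \<union> {1}" using U Us by blast
        then have x: "x \<le> Suc n" "x \<notin> \<Union>(c ` {0..m}) \<union> {1}" by auto
        have xci: "x \<notin> c i" using x i by auto
        have "x \<noteq> 0"
        proof
          assume "x = 0" then show False using xci True by simp
        qed
        then have x2: "2 \<le> x" using x by auto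
        moreover have "x \<notin> c i" using x i by auto
        ultimately have "x - 1 \<notin> rL (c i)"
        proof -
          have "x - 1 \<notin> (\<lambda>x. x - 1) ` (c i \<inter> {2..})"
          proof
            assume "x - 1 \<in> (\<lambda>x. x - 1) ` (c i \<inter> {2..})"
            then obtain y where y: "y \<in> c i" "2 \<le> y" "x - 1 = y - 1" by auto
            then have "x = y" using x2 by linarith
            then show False using y xci by simp
          qed
          moreover have "x - 1 \<noteq> 0" using x2 by simp
          ultimately show ?thesis using True by (simp add: rL_def)
        qed
        moreover have "x - 1 \<in> {0..n}" using x by auto
        ultimately show ?thesis by auto
      next
        case False
        then have "rL (c i) = {0}" by (simp add: rL_def)
        moreover have "n \<in> {0..n}" "n \<notin> {0}" using n2 by auto
        ultimately show ?thesis by blast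
      qed
    qed
    show "\<forall>A\<in>sdposet (Suc n). \<forall>A'\<in>sdposet (Suc n). A \<supseteq> A' \<longrightarrow> rL A \<supseteq> rL A'"
      by (auto simp: rL_def)
    have mrL: "Min (rL A) = 0" if "A \<subseteq> {0..Suc n}" for A
    proof -
      have "finite (rL A)" using that finite_subset[OF that] by (auto simp: rL_def)
      then show ?thesis by (intro Min_eqI) (auto simp: rL_def)
    qed
    show "\<forall>A\<in>sdposet (Suc n). \<forall>A'\<in>sdposet (Suc n). A \<supseteq> A' \<longrightarrow> Min A = Min A' \<longrightarrow> Min (rL A) = Min (rL A')"
      using mrL by (auto simp: sdposet_def)
  qed
  then show ?thesis by (simp add: M_L)
qed



theorem theorem7p5:
  fixes X :: "'a sset" and W :: "'a set"
  assumes "marked_sset X W"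
  shows "(quasicategory (Ex_plus X W) \<longrightarrow>
            (\<forall>n k. 2 \<le> n \<longrightarrow> 0 < k \<longrightarrow> k \<le> n \<longrightarrow> mrlp (L n k) (Lmark n k) (LJ n k) X W))
       \<and> (quasicategory X \<and> CLF X W \<longrightarrow> quasicategory (Ex_plus X W))
       \<and> (quasicategory (Ex_op_plus X W) \<longrightarrow>
            (\<forall>n k. 2 \<le> n \<longrightarrow> k < n \<longrightarrow> mrlp (R n k) (Rmark n k) (RJ n k) X W))
       \<and> (quasicategory X \<and> CRF X W \<longrightarrow> quasicategory (Ex_op_plus X W))"
proof (intro conjI impI allI)
  fix n k :: nat
  assume qE: "quasicategory (Ex_plus X W)" and n2: "2 \<le> n" and k0: "0 < k" and kn: "k \<le> n"
  show "mrlp (L n k) (Lmark n k) (LJ n k) X W"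
  proof (cases "k = n")
    case True then show ?thesis using special_P[OF qE n2] by simp
  next
    case False
    then have "k < n" using kn by simp
    then show ?thesis using P.thm_a_inner[of X W k n] qE k0 by (simp add: P_Ex P_L)
  qed
next
  assume h: "quasicategory X \<and> CLF X W"
  have wc: "weakly_closed X W" using h by (simp add: CLF_def)
  have lifts: "\<forall>n k. 0 < k \<longrightarrow> k < n \<longrightarrow> mrlp (P.Lg n k) (P.Lmk n k) (P.LJg n k) X W"
    using h unfolding CLF_def P_L by auto
  show "quasicategory (Ex_plus X W)" using P.thm_b[OF _ wc lifts] h by (simp add: P_Ex)
next
  fix n k :: nat
  assume qE: "quasicategory (Ex_op_plus X W)" and n2: "2 \<le> n" and kn: "k < n"
  show "mrlp (R n k) (Rmark n k) (RJ n k) X W"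
  proof (cases "k = 0")
    case True then show ?thesis using special_M[OF qE n2] by simp
  next
    case False
    then show ?thesis using M.thm_a_inner[of X W k n] qE kn by (simp add: M_Ex M_L)
  qed
next
  assume h: "quasicategory X \<and> CRF X W"
  have wc: "weakly_closed X W" using h by (simp add: CRF_def)
  have lifts: "\<forall>n k. 0 < k \<longrightarrow> k < n \<longrightarrow> mrlp (M.Lg n k) (M.Lmk n k) (M.LJg n k) X W"
    using h unfolding CRF_def M_L by auto
  show "quasicategory (Ex_op_plus X W)" using M.thm_b[OF _ wc lifts] h by (simp add: M_Ex)
qed



end
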